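(* Let $d\ge1$, let $G=(V,E)$ be a graph on at least $d$ vertices, and let $G'$ be obtained from the cone $G*v$ by deleting $t$ edges incident to $v$. Suppose $G'$ is minimally $\mathcal{R}_{d+1}$-rigid. Then $G$ is $\mathcal{R}_d$-rigid and $|E|=d|V|-\binom{d+1}{2}+t$. Moreover, if $S$ is the set of vertices of $G'$ (other than $v$) that are not adjacent to $v$, then $G-S$ is $\mathcal{R}_d$-independent and each $s\in S$ belongs to an $\mathcal{R}_d$-circuit in $G$.
   Context: For a graph $G=(V,E)$ and a generic $p:V\to\mathbb{R}^d$ (coordinates algebraically independent over $\mathbb{Q}$), the rigidity matrix has a row for each $uv\in E$ with $p(u)-p(v)$ in the $d$ columns of $u$, $p(v)-p(u)$ in those of $v$, zeros elsewhere; $\mathcal{R}_d$ is its row matroid, with rank $r_d$. A graph $H=(W,F)$ is $\mathcal{R}_d$-independent if $r_d(F)=|F|$; $\mathcal{R}_d$-rigid if it is complete on at most $d+1$ vertices or $r_d(F)=d|W|-\binom{d+1}{2}$; minimally $\mathcal{R}_d$-rigid if both. An $\mathcal{R}_d$-circuit is a minimal dependent edge set. The cone $G*v$ is obtained by adding a new vertex $v$ adjacent to every vertex of $G$. *)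

theory Defs
  imports Complex_Main
begin

definition simple_graph :: "'a set \<Rightarrow> 'a set set \<Rightarrow> bool" where
  "simple_graph V E \<longleftrightarrow> finite V \<and> (\<forall>e\<in>E. e \<subseteq> V \<and> card e = 2)"

definition complete_edges :: "'a set \<Rightarrow> 'a set set" where
  "complete_edges W = {{u, w} | u w. u \<in> W \<and> w \<in> W \<and> u \<noteq> w}"

text \<open>A polynomial is given by its finitely supported coefficient
  function c on monomials (exponent vectors m :: 'i => nat supported in I).\<close>
definition alg_indep_Q :: "'i set \<Rightarrow> ('i \<Rightarrow> real) \<Rightarrow> bool" where
  "alg_indep_Q I x \<longleftrightarrow>
     (\<forall>c :: ('i \<Rightarrow> nat) \<Rightarrow> real.
        finite {m. c m \<noteq> 0} \<and> (\<forall>m. c m \<in> \<rat>) \<and>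
        (\<forall>m. c m \<noteq> 0 \<longrightarrow> (\<forall>i. i \<notin> I \<longrightarrow> m i = 0)) \<and>
        (\<Sum>m\<in>{m. c m \<noteq> 0}. c m * (\<Prod>i\<in>I. x i ^ m i)) = 0
        \<longrightarrow> (\<forall>m. c m = 0))"

text \<open>A realisation p : V -> R^d, coordinates p u k for k < d.\<close>
definition generic :: "nat \<Rightarrow> 'a set \<Rightarrow> ('a \<Rightarrow> nat \<Rightarrow> real) \<Rightarrow> bool" where
  "generic d V p \<longleftrightarrow> alg_indep_Q (V \<times> {..<d}) (\<lambda>(u, k). p u k)"

text \<open>Entry of the row of edge e in column (w,k): for e = {u,w} it is p(w)_k - p(u)_k,
  and 0 if w is not an endpoint of e.\<close>
definition rig_entry :: "('a \<Rightarrow> nat \<Rightarrow> real) \<Rightarrow> 'a set \<Rightarrow> 'a \<Rightarrow> nat \<Rightarrow> real" where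
  "rig_entry p e w k = (if w \<in> e then (\<Sum>z\<in>e - {w}. p w k - p z k) else 0)"

definition rows_indep :: "nat \<Rightarrow> ('a \<Rightarrow> nat \<Rightarrow> real) \<Rightarrow> 'a set set \<Rightarrow> bool" where
  "rows_indep d p F \<longleftrightarrow>
     (\<forall>c :: 'a set \<Rightarrow> real.
        (\<forall>w k. k < d \<longrightarrow> (\<Sum>e\<in>F. c e * rig_entry p e w k) = 0) \<longrightarrow> (\<forall>e\<in>F. c e = 0))"

definition rig_rank :: "nat \<Rightarrow> ('a \<Rightarrow> nat \<Rightarrow> real) \<Rightarrow> 'a set set \<Rightarrow> nat" where
  "rig_rank d p F = Max {card F' | F'. F' \<subseteq> F \<and> rows_indep d p F'}"

definition gen_rank :: "nat \<Rightarrow> 'a set \<Rightarrow> 'a set set \<Rightarrow> nat" where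
  "gen_rank d V F = rig_rank d (SOME p. generic d V p) F"

definition R_indep :: "nat \<Rightarrow> 'a set \<Rightarrow> 'a set set \<Rightarrow> bool" where
  "R_indep d W F \<longleftrightarrow> gen_rank d W F = card F"

definition R_rigid :: "nat \<Rightarrow> 'a set \<Rightarrow> 'a set set \<Rightarrow> bool" where
  "R_rigid d W F \<longleftrightarrow>
     (F = complete_edges W \<and> card W \<le> d + 1) \<or>
     int (gen_rank d W F) = int d * int (card W) - int ((d + 1) choose 2)"

definition R_min_rigid :: "nat \<Rightarrow> 'a set \<Rightarrow> 'a set set \<Rightarrow> bool" where
  "R_min_rigid d W F \<longleftrightarrow> R_rigid d W F \<and> R_indep d W F"

definition R_circuit :: "nat \<Rightarrow> 'a set \<Rightarrow> 'a set set \<Rightarrow> bool" where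
  "R_circuit d V C \<longleftrightarrow> \<not> R_indep d V C \<and> (\<forall>C'. C' \<subset> C \<longrightarrow> R_indep d V C')"

end

theory Submission
  imports Defs "Jordan_Normal_Form.Determinant" "HOL-Library.Function_Algebras"
    "HOL-Analysis.Continuum_Not_Denumerable" "HOL-Library.FuncSet" "HOL-Computational_Algebra.Polynomial"
begin

definition mnm :: "'i set \<Rightarrow> ('i \<Rightarrow> nat) \<Rightarrow> ('i \<Rightarrow> real) \<Rightarrow> real" where
  "mnm I m x = (\<Prod>i\<in>I. x i ^ m i)"

definition qpoly :: "'i set \<Rightarrow> (('i \<Rightarrow> real) \<Rightarrow> real) \<Rightarrow> bool" where
  "qpoly I f \<longleftrightarrow> (\<exists>S c. finite S \<and> (\<forall>m\<in>S. c m \<in> \<rat> \<and> (\<forall>i. i \<notin> I \<longrightarrow> m i = 0))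
      \<and> (\<forall>x. f x = (\<Sum>m\<in>S. c m * mnm I m x)))"

lemma qpoly_const: "r \<in> \<rat> \<Longrightarrow> qpoly I (\<lambda>x. r)"
  unfolding qpoly_def
  by (rule exI[of _ "{\<lambda>_. 0}"], rule exI[of _ "\<lambda>_. r"]) (auto simp: mnm_def)

lemma qpoly_var: "i \<in> I \<Longrightarrow> finite I \<Longrightarrow> qpoly I (\<lambda>x. x i)"
  unfolding qpoly_def
proof (rule exI[of _ "{\<lambda>j. if j = i then 1 else 0}"], rule exI[of _ "\<lambda>_. 1"], intro conjI allI ballI)
  fix x :: "'a \<Rightarrow> real"
  assume "i \<in> I" "finite I"
  have "mnm I (\<lambda>j. if j = i then 1 else 0) x = x i ^ 1 * (\<Prod>j\<in>I-{i}. x j ^ (if j = i then 1 else 0))"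
    unfolding mnm_def using \<open>i \<in> I\<close> \<open>finite I\<close> by (subst prod.remove[of _ i]) auto
  also have "\<dots> = x i" by simp
  finally show "x i = (\<Sum>m\<in>{\<lambda>j. if j = i then 1 else 0}. 1 * mnm I m x)" by simp
qed (auto)

lemma qpoly_add: assumes "qpoly I f" "qpoly I g" shows "qpoly I (\<lambda>x. f x + g x)"
proof -
  obtain S1 c1 where 1: "finite S1" "\<forall>m\<in>S1. c1 m \<in> \<rat> \<and> (\<forall>i. i \<notin> I \<longrightarrow> m i = 0)"
    "\<forall>x. f x = (\<Sum>m\<in>S1. c1 m * mnm I m x)" using assms(1) unfolding qpoly_def by blast
  obtain S2 c2 where 2: "finite S2" "\<forall>m\<in>S2. c2 m \<in> \<rat> \<and> (\<forall>i. i \<notin> I \<longrightarrow> m i = 0)"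
    "\<forall>x. g x = (\<Sum>m\<in>S2. c2 m * mnm I m x)" using assms(2) unfolding qpoly_def by blast
  define c where "c m = (if m \<in> S1 then c1 m else 0) + (if m \<in> S2 then c2 m else 0)" for m
  have h1: "finite (S1 \<union> S2)" using 1 2 by auto
  have h2: "\<forall>m\<in>S1 \<union> S2. c m \<in> \<rat> \<and> (\<forall>i. i \<notin> I \<longrightarrow> m i = 0)"
      using 1 2 unfolding c_def by auto
  have h3: "f x + g x = (\<Sum>m\<in>S1 \<union> S2. c m * mnm I m x)" for x
  proof -
    have a: "(\<Sum>m\<in>S1 \<union> S2. (if m \<in> S1 then c1 m else 0) * mnm I m x) = (\<Sum>m\<in>S1. c1 m * mnm I m x)"
      by (rule sum.mono_neutral_cong_right) (use 1 2 in auto)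
    have b: "(\<Sum>m\<in>S1 \<union> S2. (if m \<in> S2 then c2 m else 0) * mnm I m x) = (\<Sum>m\<in>S2. c2 m * mnm I m x)"
      by (rule sum.mono_neutral_cong_right) (use 1 2 in auto)
    show ?thesis
      unfolding c_def distrib_right sum.distrib a b using 1 2 by simp
  qed
  show ?thesis unfolding qpoly_def
    by (rule exI[of _ "S1 \<union> S2"], rule exI[of _ c]) (use h1 h2 h3 in simp)
qed

lemma mnm_add: "finite I \<Longrightarrow> mnm I (\<lambda>i. a i + b i) x = mnm I a x * mnm I b x"
  unfolding mnm_def by (simp add: power_add prod.distrib)

lemma qpoly_mult: assumes "qpoly I f" "qpoly I g" "finite I" shows "qpoly I (\<lambda>x. f x * g x)"
proof -
  obtain S1 c1 where 1: "finite S1" "\<forall>m\<in>S1. c1 m \<in> \<rat> \<and> (\<forall>i. i \<notin> I \<longrightarrow> m i = 0)"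
    "\<forall>x. f x = (\<Sum>m\<in>S1. c1 m * mnm I m x)" using assms(1) unfolding qpoly_def by blast
  obtain S2 c2 where 2: "finite S2" "\<forall>m\<in>S2. c2 m \<in> \<rat> \<and> (\<forall>i. i \<notin> I \<longrightarrow> m i = 0)"
    "\<forall>x. g x = (\<Sum>m\<in>S2. c2 m * mnm I m x)" using assms(2) unfolding qpoly_def by blast
  define pl where "pl = (\<lambda>(a::'a\<Rightarrow>nat, b::'a\<Rightarrow>nat). (\<lambda>i. a i + b i))"
  define S where "S = pl ` (S1 \<times> S2)"
  define c where "c m = (\<Sum>ab\<in>{ab \<in> S1 \<times> S2. pl ab = m}. c1 (fst ab) * c2 (snd ab))" for m
  have h1: "finite S" using 1 2 unfolding S_def by auto
  have h2: "\<forall>m\<in>S. c m \<in> \<rat> \<and> (\<forall>i. i \<notin> I \<longrightarrow> m i = 0)"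
  proof
    fix m assume "m \<in> S"
    have "c m \<in> \<rat>" unfolding c_def using 1 2 by (intro Rats_sum) auto
    moreover have "\<forall>i. i \<notin> I \<longrightarrow> m i = 0" using \<open>m \<in> S\<close> 1 2 unfolding S_def pl_def by auto
    ultimately show "c m \<in> \<rat> \<and> (\<forall>i. i \<notin> I \<longrightarrow> m i = 0)" by blast
  qed
  have h3: "f x * g x = (\<Sum>m\<in>S. c m * mnm I m x)" for x
  proof -
    have "(\<Sum>m\<in>S. c m * mnm I m x) = (\<Sum>m\<in>S. \<Sum>ab\<in>{ab \<in> S1 \<times> S2. pl ab = m}. c1 (fst ab) * c2 (snd ab) * mnm I (pl ab) x)"
      unfolding c_def sum_distrib_right by (intro sum.cong refl) auto
    also have "\<dots> = (\<Sum>ab\<in>S1 \<times> S2. c1 (fst ab) * c2 (snd ab) * mnm I (pl ab) x)"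
      by (rule sum.group) (use 1 2 in \<open>auto simp: S_def\<close>)
    also have "\<dots> = (\<Sum>ab\<in>S1 \<times> S2. (c1 (fst ab) * mnm I (fst ab) x) * (c2 (snd ab) * mnm I (snd ab) x))"
      by (intro sum.cong refl) (auto simp: pl_def mnm_add[OF assms(3)])
    also have "\<dots> = f x * g x"
      unfolding 1(3)[rule_format] 2(3)[rule_format] sum_product sum.cartesian_product by (simp add: case_prod_beta)
    finally show ?thesis ..
  qed
  show ?thesis unfolding qpoly_def
    by (rule exI[of _ S], rule exI[of _ c]) (use h1 h2 h3 in simp)
qed

lemma qpoly_uminus: "qpoly I f \<Longrightarrow> finite I \<Longrightarrow> qpoly I (\<lambda>x. - f x)"
  using qpoly_mult[OF qpoly_const[of "-1"], of I f] by simp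

lemma qpoly_diff: "qpoly I f \<Longrightarrow> qpoly I g \<Longrightarrow> finite I \<Longrightarrow> qpoly I (\<lambda>x. f x - g x)"
  using qpoly_add[OF _ qpoly_uminus, of I f g] by simp

lemma qpoly_sum: "finite A \<Longrightarrow> finite I \<Longrightarrow> (\<And>a. a \<in> A \<Longrightarrow> qpoly I (f a)) \<Longrightarrow> qpoly I (\<lambda>x. \<Sum>a\<in>A. f a x)"
  by (induction A rule: finite_induct) (auto intro: qpoly_add qpoly_const)

lemma qpoly_prod: "finite A \<Longrightarrow> finite I \<Longrightarrow> (\<And>a. a \<in> A \<Longrightarrow> qpoly I (f a)) \<Longrightarrow> qpoly I (\<lambda>x. \<Prod>a\<in>A. f a x)"
  by (induction A rule: finite_induct) (auto intro: qpoly_mult qpoly_const)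

lemma qpoly_generic:
  assumes "alg_indep_Q I x" "qpoly I f" "f x = 0"
  shows "f y = 0"
proof -
  obtain S c where 1: "finite S" "\<forall>m\<in>S. c m \<in> \<rat> \<and> (\<forall>i. i \<notin> I \<longrightarrow> m i = 0)"
    "\<forall>x. f x = (\<Sum>m\<in>S. c m * mnm I m x)" using assms(2) unfolding qpoly_def by blast
  define c' where "c' m = (if m \<in> S then c m else 0)" for m
  have sub: "{m. c' m \<noteq> 0} \<subseteq> S" unfolding c'_def by auto
  have eq: "(\<Sum>m\<in>{m. c' m \<noteq> 0}. c' m * mnm I m z) = (\<Sum>m\<in>S. c m * mnm I m z)" for z
    by (rule sum.mono_neutral_cong_left) (use 1 sub in \<open>auto simp: c'_def\<close>)
  have "finite {m. c' m \<noteq> 0}" using sub 1(1) finite_subset by blast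
  moreover have "\<forall>m. c' m \<in> \<rat>" using 1 unfolding c'_def by auto
  moreover have "\<forall>m. c' m \<noteq> 0 \<longrightarrow> (\<forall>i. i \<notin> I \<longrightarrow> m i = 0)" using 1 unfolding c'_def by auto
  moreover have "(\<Sum>m\<in>{m. c' m \<noteq> 0}. c' m * (\<Prod>i\<in>I. x i ^ m i)) = 0"
    using eq[of x] assms(3) 1(3) unfolding mnm_def by simp
  ultimately have "\<forall>m. c' m = 0" using assms(1) unfolding alg_indep_Q_def by blast
  then have "\<forall>m\<in>S. c m = 0" unfolding c'_def by metis
  then show ?thesis using 1(3) by simp
qed


lemma my_countable_PiE:
  "finite I \<Longrightarrow> (\<And>i. i \<in> I \<Longrightarrow> countable (F i)) \<Longrightarrow> countable (Pi\<^sub>E I F)"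
  by (induct I arbitrary: F rule: finite_induct) (auto simp: PiE_insert_eq)

lemma alg_indep_empty: "alg_indep_Q {} x"
  unfolding alg_indep_Q_def
proof (rule allI, rule impI)
  fix c :: "('a \<Rightarrow> nat) \<Rightarrow> real"
  assume H: "finite {m. c m \<noteq> 0} \<and> (\<forall>m. c m \<in> \<rat>) \<and> (\<forall>m. c m \<noteq> 0 \<longrightarrow> (\<forall>i. i \<notin> {} \<longrightarrow> m i = 0)) \<and>
        (\<Sum>m\<in>{m. c m \<noteq> 0}. c m * (\<Prod>i\<in>{}. x i ^ m i)) = 0"
  have sub: "{m. c m \<noteq> 0} \<subseteq> {\<lambda>_. 0}" using H by auto
  have "c (\<lambda>_. 0) = 0"
  proof (rule ccontr)
    assume "c (\<lambda>_. 0) \<noteq> 0"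
    then have "{m. c m \<noteq> 0} = {\<lambda>_. 0}" using sub by auto
    then show False using H \<open>c (\<lambda>_. 0) \<noteq> 0\<close> by simp
  qed
  then show "\<forall>m. c m = 0" using sub by auto
qed

lemma alg_indep_insert:
  assumes fin: "finite I" and i0: "i0 \<notin> I" and ai: "alg_indep_Q I x"
  shows "\<exists>t. alg_indep_Q (insert i0 I) (x(i0 := t))"
proof -
  define J where "J = insert i0 I"
  define ok where "ok c \<longleftrightarrow> finite {m. c m \<noteq> 0} \<and> (\<forall>m. c m \<in> \<rat>) \<and> (\<forall>m. c m \<noteq> 0 \<longrightarrow> (\<forall>i. i \<notin> J \<longrightarrow> m i = 0))"
    for c :: "('a \<Rightarrow> nat) \<Rightarrow> real"
  define val where "val c t = (\<Sum>m\<in>{m. c m \<noteq> 0}. c m * (\<Prod>i\<in>J. (x(i0:=t)) i ^ m i))" for c t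
  have fin_roots: "finite {t. val c t = 0}" if okc: "ok c" and m0: "c m0 \<noteq> 0" for c m0
  proof -
    define Sc where "Sc = {m. c m \<noteq> 0}"
    have finSc: "finite Sc" using okc unfolding ok_def Sc_def by auto
    define j0 where "j0 = m0 i0"
    define N where "N = Max ((\<lambda>m. m i0) ` Sc)"
    define a where "a j = (\<Sum>m\<in>{m\<in>Sc. m i0 = j}. c m * mnm I m x)" for j
    have m0Sc: "m0 \<in> Sc" using m0 unfolding Sc_def by auto
    have j0N: "j0 \<le> N" unfolding N_def j0_def using finSc m0Sc by (intro Max_ge) auto
    have val_eq: "val c t = (\<Sum>j\<le>N. a j * t ^ j)" for t
    proof -
      have "val c t = (\<Sum>m\<in>Sc. c m * mnm I m x * t ^ (m i0))"
      proof (unfold val_def Sc_def, intro sum.cong refl)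
        fix m
        have "(\<Prod>i\<in>J. (x(i0:=t)) i ^ m i) = t ^ m i0 * (\<Prod>i\<in>I. (x(i0:=t)) i ^ m i)"
          unfolding J_def using fin i0 by simp
        also have "(\<Prod>i\<in>I. (x(i0:=t)) i ^ m i) = mnm I m x"
          unfolding mnm_def using i0 by (intro prod.cong refl) auto
        finally show "c m * (\<Prod>i\<in>J. (x(i0:=t)) i ^ m i) = c m * mnm I m x * t ^ m i0" by simp
      qed
      also have "\<dots> = (\<Sum>j\<in>{..N}. \<Sum>m\<in>{m\<in>Sc. m i0 = j}. c m * mnm I m x * t ^ (m i0))"
        by (rule sum.group[symmetric]) (use finSc in \<open>auto simp: N_def\<close>)
      also have "\<dots> = (\<Sum>j\<le>N. a j * t ^ j)"
        unfolding a_def sum_distrib_right by (intro sum.cong refl) auto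
      finally show ?thesis .
    qed
    define P where "P = (\<Sum>j\<le>N. monom (a j) j)"
    have polyP: "poly P t = val c t" for t
      unfolding P_def val_eq poly_sum poly_monom by simp
    have coeffP: "coeff P j0 = a j0"
      unfolding P_def coeff_sum coeff_monom using j0N by (simp add: sum.delta)
    have "a j0 \<noteq> 0"
    proof
      assume a0: "a j0 = 0"
      define c' where "c' m' = (if m' i0 = 0 then c (m'(i0 := j0)) else 0)" for m'
      define D where "D = {m\<in>Sc. m i0 = j0}"
      have supp: "{m'. c' m' \<noteq> 0} = (\<lambda>m. m(i0:=0)) ` D"
      proof (intro Set.set_eqI iffI)
        fix m' assume "m' \<in> {m'. c' m' \<noteq> 0}"
        then have h: "m' i0 = 0" "c (m'(i0 := j0)) \<noteq> 0" unfolding c'_def by (auto split: if_splits)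
        then have "m'(i0 := j0) \<in> D" unfolding D_def Sc_def by auto
        moreover have "m' = (m'(i0 := j0))(i0 := 0)" using h by auto
        ultimately show "m' \<in> (\<lambda>m. m(i0:=0)) ` D" by blast
      next
        fix m' assume "m' \<in> (\<lambda>m. m(i0:=0)) ` D"
        then obtain m where m: "m \<in> D" "m' = m(i0:=0)" by auto
        have "m(i0:=0, i0:=j0) = m" using m(1) unfolding D_def by auto
        then show "m' \<in> {m'. c' m' \<noteq> 0}" using m unfolding c'_def D_def Sc_def by auto
      qed
      have injD: "inj_on (\<lambda>m. m(i0:=0)) D"
      proof (rule inj_onI)
        fix m1 m2 assume m12: "m1 \<in> D" "m2 \<in> D" and eq: "m1(i0:=0) = m2(i0:=0)"
        show "m1 = m2"
        proof
          fix i show "m1 i = m2 i"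
          proof (cases "i = i0")
            case True then show ?thesis using m12 unfolding D_def by simp
          next
            case False then show ?thesis using fun_cong[OF eq, of i] by simp
          qed
        qed
      qed
      have finD: "finite D" using finSc unfolding D_def by auto
      have "finite {m'. c' m' \<noteq> 0}" using supp finD by simp
      moreover have "\<forall>m. c' m \<in> \<rat>" using okc unfolding ok_def c'_def by auto
      moreover have "\<forall>m'. c' m' \<noteq> 0 \<longrightarrow> (\<forall>i. i \<notin> I \<longrightarrow> m' i = 0)"
      proof (intro allI impI)
        fix m' i assume "c' m' \<noteq> 0" "i \<notin> I"
        then have h: "m' i0 = 0" "c (m'(i0 := j0)) \<noteq> 0" unfolding c'_def by (auto split: if_splits)
        show "m' i = 0"
        proof (cases "i = i0")
          case True then show ?thesis using h by simp
        next
          case False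
          then have "i \<notin> J" using \<open>i \<notin> I\<close> unfolding J_def by auto
          then have "(m'(i0 := j0)) i = 0" using okc h(2) unfolding ok_def by blast
          then show ?thesis using False by simp
        qed
      qed
      moreover have "(\<Sum>m'\<in>{m'. c' m' \<noteq> 0}. c' m' * (\<Prod>i\<in>I. x i ^ m' i)) = 0"
      proof -
        have "(\<Sum>m'\<in>{m'. c' m' \<noteq> 0}. c' m' * (\<Prod>i\<in>I. x i ^ m' i))
            = (\<Sum>m\<in>D. c' (m(i0:=0)) * (\<Prod>i\<in>I. x i ^ (m(i0:=0)) i))"
          unfolding supp by (rule sum.reindex[OF injD, unfolded comp_def])
        also have "\<dots> = (\<Sum>m\<in>D. c m * mnm I m x)"
        proof (intro sum.cong refl)
          fix m assume "m \<in> D"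
          then have "m(i0:=0, i0:=j0) = m" unfolding D_def by auto
          then have "c' (m(i0:=0)) = c m" unfolding c'_def by simp
          moreover have "(\<Prod>i\<in>I. x i ^ (m(i0:=0)) i) = mnm I m x"
            unfolding mnm_def using i0 by (intro prod.cong refl) auto
          ultimately show "c' (m(i0:=0)) * (\<Prod>i\<in>I. x i ^ (m(i0:=0)) i) = c m * mnm I m x" by simp
        qed
        also have "\<dots> = 0" using a0 unfolding a_def D_def by simp
        finally show ?thesis .
      qed
      ultimately have "\<forall>m. c' m = 0" using ai unfolding alg_indep_Q_def by blast
      moreover have "m0(i0:=0) \<in> {m'. c' m' \<noteq> 0}" unfolding supp D_def j0_def using m0Sc by auto
      ultimately show False by simp
    qed
    then have "P \<noteq> 0" using coeffP by auto
    then have "finite {t. poly P t = 0}" by (rule poly_roots_finite)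
    then show ?thesis unfolding polyP .
  qed
  define M where "M = {m :: 'a \<Rightarrow> nat. \<forall>i. i \<notin> J \<longrightarrow> m i = 0}"
  have cM: "countable M"
  proof -
    have "M \<subseteq> (\<lambda>f i. if i \<in> J then f i else 0) ` (Pi\<^sub>E J (\<lambda>_. UNIV))"
    proof
      fix m assume "m \<in> M"
      then have "m = (\<lambda>i. if i \<in> J then restrict m J i else 0)" unfolding M_def by (auto simp: fun_eq_iff)
      moreover have "restrict m J \<in> Pi\<^sub>E J (\<lambda>_. UNIV)" by auto
      ultimately show "m \<in> (\<lambda>f i. if i \<in> J then f i else 0) ` (Pi\<^sub>E J (\<lambda>_. UNIV))" by (rule image_eqI)
    qed
    moreover have "countable (Pi\<^sub>E J (\<lambda>_. UNIV :: nat set))"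
      using fin unfolding J_def by (intro my_countable_PiE) auto
    ultimately show ?thesis by (rule countable_subset[OF _ countable_image])
  qed
  define gr where "gr c = {(m, c m) | m. c m \<noteq> 0}" for c :: "('a \<Rightarrow> nat) \<Rightarrow> real"
  have cC: "countable {c. ok c}"
  proof (rule countable_image_inj_on[of gr])
    have "gr ` {c. ok c} \<subseteq> {P. finite P \<and> P \<subseteq> M \<times> \<rat>}"
    proof
      fix P assume "P \<in> gr ` {c. ok c}"
      then obtain c where c: "ok c" "P = gr c" by auto
      have "gr c = (\<lambda>m. (m, c m)) ` {m. c m \<noteq> 0}" unfolding gr_def by auto
      then have "finite P" using c unfolding ok_def by auto
      moreover have "P \<subseteq> M \<times> \<rat>" using c unfolding ok_def gr_def M_def by auto
      ultimately show "P \<in> {P. finite P \<and> P \<subseteq> M \<times> \<rat>}" by blast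
    qed
    moreover have "countable {P. finite P \<and> P \<subseteq> M \<times> \<rat>}"
      by (intro countable_Collect_finite_subset countable_SIGMA cM countable_rat)
    ultimately show "countable (gr ` {c. ok c})" using countable_subset by blast
  next
    show "inj_on gr {c. ok c}"
    proof (rule inj_onI)
      fix c1 c2 assume "gr c1 = gr c2"
      have "c1 m = c2 m" for m
      proof (cases "c1 m = 0")
        case True
        show ?thesis
        proof (rule ccontr)
          assume "c1 m \<noteq> c2 m"
          then have "(m, c2 m) \<in> gr c2" using True unfolding gr_def by auto
          then have "(m, c2 m) \<in> gr c1" using \<open>gr c1 = gr c2\<close> by simp
          then show False using True \<open>c1 m \<noteq> c2 m\<close> unfolding gr_def by auto
        qed
      next
        case False
        then have "(m, c1 m) \<in> gr c1" unfolding gr_def by auto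
        then have "(m, c1 m) \<in> gr c2" using \<open>gr c1 = gr c2\<close> by simp
        then show ?thesis unfolding gr_def by auto
      qed
      then show "c1 = c2" by auto
    qed
  qed
  define BAD where "BAD = (\<Union>c\<in>{c. ok c \<and> (\<exists>m. c m \<noteq> 0)}. {t. val c t = 0})"
  have cC': "countable {c. ok c \<and> (\<exists>m. c m \<noteq> 0)}" by (rule countable_subset[OF _ cC]) auto
  have "countable BAD" unfolding BAD_def
  proof (rule countable_UN[OF cC'])
    fix c assume "c \<in> {c. ok c \<and> (\<exists>m. c m \<noteq> 0)}"
    then obtain m0 where "ok c" "c m0 \<noteq> 0" by blast
    then show "countable {t. val c t = 0}" by (intro countable_finite fin_roots)
  qed
  then obtain t where t: "t \<notin> BAD" using uncountable_UNIV_real countable_subset[of UNIV BAD]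
    by blast
  show ?thesis
  proof (intro exI[of _ t], unfold alg_indep_Q_def, rule allI, rule impI)
    fix c :: "('a \<Rightarrow> nat) \<Rightarrow> real"
    assume H: "finite {m. c m \<noteq> 0} \<and> (\<forall>m. c m \<in> \<rat>) \<and> (\<forall>m. c m \<noteq> 0 \<longrightarrow> (\<forall>i. i \<notin> insert i0 I \<longrightarrow> m i = 0)) \<and>
        (\<Sum>m\<in>{m. c m \<noteq> 0}. c m * (\<Prod>i\<in>insert i0 I. (x(i0 := t)) i ^ m i)) = 0"
    show "\<forall>m. c m = 0"
    proof (rule ccontr)
      assume "\<not> (\<forall>m. c m = 0)"
      moreover have "ok c" using H unfolding ok_def J_def by blast
      moreover have "val c t = 0" using H unfolding val_def J_def by blast
      ultimately have "t \<in> BAD" unfolding BAD_def by blast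
      then show False using t by blast
    qed
  qed
qed

lemma alg_indep_exists: "finite I \<Longrightarrow> \<exists>x. alg_indep_Q I x"
proof (induction I rule: finite_induct)
  case empty then show ?case using alg_indep_empty by blast
next
  case (insert i0 I)
  then obtain x where "alg_indep_Q I x" by blast
  then show ?case using alg_indep_insert[OF insert(1,2)] by blast
qed

lemma generic_exists: "finite V \<Longrightarrow> \<exists>p. generic d V p"
proof -
  assume "finite V"
  then have "finite (V \<times> {..<d})" by simp
  then obtain x where x: "alg_indep_Q (V \<times> {..<d}) x" using alg_indep_exists by blast
  have "generic d V (\<lambda>u k. x (u, k))" unfolding generic_def using x by (simp only: case_prod_eta)
  then show ?thesis by blast
qed

lemma generic_some: "finite V \<Longrightarrow> generic d V (SOME p. generic d V p)"
  by (rule someI_ex[OF generic_exists])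

definition sc :: "real \<Rightarrow> ('b \<Rightarrow> real) \<Rightarrow> ('b \<Rightarrow> real)" where "sc c f = (\<lambda>x. c * f x)"

interpretation FV: vector_space "sc :: real \<Rightarrow> ('b \<Rightarrow> real) \<Rightarrow> ('b \<Rightarrow> real)"
  by unfold_locales (auto simp: fun_eq_iff algebra_simps sc_def func_plus)

definition erow :: "nat \<Rightarrow> ('a \<Rightarrow> nat \<Rightarrow> real) \<Rightarrow> 'a set \<Rightarrow> ('a \<times> nat \<Rightarrow> real)" where
  "erow d p e = (\<lambda>(w, k). if k < d then rig_entry p e w k else 0)"

lemma fsum_apply: "(\<Sum>e\<in>F. f e) x = (\<Sum>e\<in>F. f e x)"
  by (induction F rule: infinite_finite_induct) (auto simp: func_plus func_zero)

lemma rows_sum_zero_iff: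
  "(\<Sum>e\<in>F. sc (c e) (erow d p e)) = 0 \<longleftrightarrow> (\<forall>w k. k < d \<longrightarrow> (\<Sum>e\<in>F. c e * rig_entry p e w k) = 0)"
proof -
  have H: "(\<Sum>e\<in>F. sc (c e) (erow d p e)) (w, k) = (if k < d then (\<Sum>e\<in>F. c e * rig_entry p e w k) else 0)" for w k
    unfolding fsum_apply sc_def erow_def by (cases "k < d") auto
  show ?thesis
  proof
    assume A: "(\<Sum>e\<in>F. sc (c e) (erow d p e)) = 0"
    show "\<forall>w k. k < d \<longrightarrow> (\<Sum>e\<in>F. c e * rig_entry p e w k) = 0"
    proof (intro allI impI)
      fix w k assume "k < d"
      have "(\<Sum>e\<in>F. sc (c e) (erow d p e)) (w, k) = 0" using A by (simp add: func_zero)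
      then show "(\<Sum>e\<in>F. c e * rig_entry p e w k) = 0" using H[of w k] \<open>k < d\<close> by simp
    qed
  next
    assume B: "\<forall>w k. k < d \<longrightarrow> (\<Sum>e\<in>F. c e * rig_entry p e w k) = 0"
    show "(\<Sum>e\<in>F. sc (c e) (erow d p e)) = 0"
    proof (rule ext)
      fix x :: "'a \<times> nat"
      obtain w k where x: "x = (w, k)" by (cases x)
      show "(\<Sum>e\<in>F. sc (c e) (erow d p e)) x = 0 x" unfolding x H func_zero using B by simp
    qed
  qed
qed

lemma rows_indep_alt: "rows_indep d p F \<longleftrightarrow> (\<forall>c. (\<Sum>e\<in>F. sc (c e) (erow d p e)) = 0 \<longrightarrow> (\<forall>e\<in>F. c e = 0))"
  unfolding rows_indep_def rows_sum_zero_iff ..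

lemma rows_indep_empty: "rows_indep d p {}"
  unfolding rows_indep_def by simp

lemma rows_indep_subset:
  assumes "finite F" "rows_indep d p F" "F' \<subseteq> F" shows "rows_indep d p F'"
  unfolding rows_indep_def
proof (intro allI impI ballI)
  fix c e assume H: "\<forall>w k. k < d \<longrightarrow> (\<Sum>e\<in>F'. c e * rig_entry p e w k) = 0" and e: "e \<in> F'"
  define c' where "c' e = (if e \<in> F' then c e else 0)" for e
  have "(\<Sum>e\<in>F. c' e * rig_entry p e w k) = (\<Sum>e\<in>F'. c e * rig_entry p e w k)" for w k
    by (rule sum.mono_neutral_cong_right) (use assms in \<open>auto simp: c'_def\<close>)
  then have "\<forall>e\<in>F. c' e = 0" using assms(2) H unfolding rows_indep_def by simp
  moreover have "e \<in> F" using e assms(3) by auto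
  ultimately have "c' e = 0" by blast
  then show "c e = 0" using e unfolding c'_def by simp
qed

lemma rows_indep_imp:
  assumes fin: "finite F" and ind: "rows_indep d p F"
  shows "inj_on (erow d p) F \<and> FV.independent (erow d p ` F)"
proof
  show inj: "inj_on (erow d p) F"
  proof (rule inj_onI, rule ccontr)
    fix e1 e2 assume e: "e1 \<in> F" "e2 \<in> F" "erow d p e1 = erow d p e2" "e1 \<noteq> e2"
    define c where "c e = (if e = e1 then 1 else 0) - (if e = e2 then 1 else (0::real))" for e
    have "(\<Sum>e\<in>F. sc (c e) (erow d p e)) x = 0" for x
    proof -
      have "(\<Sum>e\<in>F. sc (c e) (erow d p e)) x = (\<Sum>e\<in>F. (if e = e1 then erow d p e1 x else 0) - (if e = e2 then erow d p e2 x else 0))"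
        unfolding fsum_apply sc_def c_def by (intro sum.cong refl) auto
      also have "\<dots> = 0" unfolding sum_subtractf using e fin by (simp add: sum.delta)
      finally show ?thesis .
    qed
    then have "(\<Sum>e\<in>F. sc (c e) (erow d p e)) = 0" unfolding func_zero by auto
    then have "c e1 = 0" using ind e(1) unfolding rows_indep_alt by blast
    then show False using e(4) unfolding c_def by simp
  qed
  show "FV.independent (erow d p ` F)"
  proof (rule FV.independent_if_scalars_zero)
    show "finite (erow d p ` F)" using fin by simp
  next
    fix f v assume s: "(\<Sum>x\<in>erow d p ` F. sc (f x) x) = 0" and v: "v \<in> erow d p ` F"
    have "(\<Sum>e\<in>F. sc (f (erow d p e)) (erow d p e)) = 0"
      using s unfolding sum.reindex[OF inj] comp_def .
    moreover have "\<And>c. (\<Sum>e\<in>F. sc (c e) (erow d p e)) = 0 \<Longrightarrow> \<forall>e\<in>F. c e = 0" using ind unfolding rows_indep_alt by blast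
    ultimately have "\<forall>e\<in>F. f (erow d p e) = 0" by (rule rev_mp[OF _ impI]) (rule meta_mp)
    then show "f v = 0" using v by auto
  qed
qed

lemma rows_indep_of:
  assumes fin: "finite F" and inj: "inj_on (erow d p) F" and ind: "FV.independent (erow d p ` F)"
  shows "rows_indep d p F"
  unfolding rows_indep_alt
proof (intro allI impI ballI)
  fix c e assume s: "(\<Sum>e\<in>F. sc (c e) (erow d p e)) = 0" and e: "e \<in> F"
  define u where "u v = c (the_inv_into F (erow d p) v)" for v
  have "(\<Sum>v\<in>erow d p ` F. sc (u v) v) = (\<Sum>e\<in>F. sc (u (erow d p e)) (erow d p e))"
    using sum.reindex[OF inj] unfolding comp_def .
  also have "\<dots> = (\<Sum>e\<in>F. sc (c e) (erow d p e))"
    unfolding u_def using the_inv_into_f_f[OF inj] by (intro sum.cong refl) auto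
  finally have "(\<Sum>v\<in>erow d p ` F. sc (u v) v) = 0" using s by simp
  then have "u (erow d p e) = 0" using ind fin e unfolding FV.independent_explicit_module by blast
  then show "c e = 0" unfolding u_def using the_inv_into_f_f[OF inj e] by simp
qed

lemma rank_set_finite: "finite F \<Longrightarrow> finite {card F' | F'. F' \<subseteq> F \<and> rows_indep d p F'}"
  by (rule finite_subset[of _ "card ` Pow F"]) auto

lemma rig_rank_ge: "finite F \<Longrightarrow> F' \<subseteq> F \<Longrightarrow> rows_indep d p F' \<Longrightarrow> card F' \<le> rig_rank d p F"
  unfolding rig_rank_def by (rule Max_ge[OF rank_set_finite]) auto

lemma rig_rank_obtain: "finite F \<Longrightarrow> \<exists>F'\<subseteq>F. rows_indep d p F' \<and> card F' = rig_rank d p F"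
proof -
  assume fin: "finite F"
  have "rig_rank d p F \<in> {card F' | F'. F' \<subseteq> F \<and> rows_indep d p F'}"
    unfolding rig_rank_def using rows_indep_empty by (intro Max_in[OF rank_set_finite[OF fin]]) auto
  then show ?thesis by auto
qed

lemma rig_rank_le_card: "finite F \<Longrightarrow> rig_rank d p F \<le> card F"
  using rig_rank_obtain by (metis card_mono)

lemma rig_rank_mono: "finite G \<Longrightarrow> F \<subseteq> G \<Longrightarrow> rig_rank d p F \<le> rig_rank d p G"
proof -
  assume fin: "finite G" and sub: "F \<subseteq> G"
  obtain F' where F': "F' \<subseteq> F" "rows_indep d p F'" "card F' = rig_rank d p F"
    using rig_rank_obtain[OF finite_subset[OF sub fin]] by blast
  show ?thesis using rig_rank_ge[OF fin order_trans[OF F'(1) sub] F'(2)] F'(3) by simp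
qed

lemma rows_indep_iff_rank: "finite F \<Longrightarrow> rows_indep d p F \<longleftrightarrow> rig_rank d p F = card F"
proof
  assume "finite F" "rows_indep d p F"
  then show "rig_rank d p F = card F" using rig_rank_ge[OF _ order_refl, of F d p] rig_rank_le_card[of F d p] by auto
next
  assume fin: "finite F" and r: "rig_rank d p F = card F"
  then obtain F' where "F' \<subseteq> F" "rows_indep d p F'" "card F' = card F" using rig_rank_obtain by metis
  then show "rows_indep d p F" using card_subset_eq[OF fin] by metis
qed

lemma rows_basis_ext:
  assumes fin: "finite F" and sub: "A0 \<subseteq> F" and ind0: "rows_indep d p A0"
  shows "\<exists>A. A0 \<subseteq> A \<and> A \<subseteq> F \<and> rows_indep d p A \<and> erow d p ` F \<subseteq> FV.span (erow d p ` A)"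
proof -
  have fin0: "finite A0" using finite_subset[OF sub fin] .
  have i0: "inj_on (erow d p) A0" "FV.independent (erow d p ` A0)" using rows_indep_imp[OF fin0 ind0] by auto
  obtain B where B: "erow d p ` A0 \<subseteq> B" "B \<subseteq> erow d p ` F" "FV.independent B" "erow d p ` F \<subseteq> FV.span B"
    using FV.maximal_independent_subset_extend[of "erow d p ` A0" "erow d p ` F"] sub i0 by blast
  define rep where "rep b = (SOME e. e \<in> F \<and> erow d p e = b)" for b
  have rep: "rep b \<in> F \<and> erow d p (rep b) = b" if "b \<in> erow d p ` F" for b
    unfolding rep_def using that by (rule imageE) (rule someI, blast)
  define X where "X = B - erow d p ` A0"
  define A where "A = A0 \<union> rep ` X"
  have "rep ` X \<subseteq> F"
  proof
    fix e assume "e \<in> rep ` X"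
    then obtain b where "b \<in> X" "e = rep b" by blast
    then have "b \<in> erow d p ` F" using B(2) unfolding X_def by blast
    then show "e \<in> F" using rep \<open>e = rep b\<close> by blast
  qed
  then have AF: "A \<subseteq> F" unfolding A_def using sub by blast
  have finA: "finite A" using finite_subset[OF AF fin] .
  have finB: "finite B" using finite_subset[OF B(2)] fin by simp
  have repX: "\<forall>b\<in>X. erow d p (rep b) = b" using rep B(2) unfolding X_def by blast
  have finX: "finite X" using finB unfolding X_def by simp
  have "(\<lambda>b. erow d p (rep b)) ` X = (\<lambda>b. b) ` X" by (rule image_cong) (use repX in auto)
  then have rX: "erow d p ` rep ` X = X" by (simp add: image_image)
  have rowA: "erow d p ` A = B"
    unfolding A_def image_Un rX using B(1) unfolding X_def by blast
  have c1: "card (rep ` X) \<le> card X" using finX by (rule card_image_le)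
  have finA0': "finite (erow d p ` A0)" using fin0 by simp
  have c2: "card X = card B - card (erow d p ` A0)" unfolding X_def by (rule card_Diff_subset[OF finA0' B(1)])
  have c3: "card (erow d p ` A0) \<le> card B" by (rule card_mono[OF finB B(1)])
  have c4: "card (erow d p ` A0) = card A0" using card_image[OF i0(1)] .
  have "card A \<le> card A0 + card (rep ` X)" unfolding A_def by (rule card_Un_le)
  also have "\<dots> \<le> card B" using c1 c2 c3 c4 by linarith
  finally have "card A \<le> card (erow d p ` A)" using rowA by simp
  then have "card (erow d p ` A) = card A" using card_image_le[OF finA, of "erow d p"] by simp
  then have injA: "inj_on (erow d p) A" using eq_card_imp_inj_on[OF finA] by blast
  have "rows_indep d p A" using rows_indep_of[OF finA injA] rowA B(3) by simp
  moreover have "A0 \<subseteq> A" unfolding A_def by blast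
  moreover have "erow d p ` F \<subseteq> FV.span (erow d p ` A)" using B(4) rowA by simp
  ultimately show ?thesis using AF by blast
qed

lemma rows_span_bound:
  assumes finA: "finite A" and finB: "finite B" and indA: "rows_indep d p A"
    and sp: "erow d p ` A \<subseteq> FV.span (erow d p ` B)"
  shows "card A \<le> rig_rank d p B"
proof -
  from rows_basis_ext[OF finB empty_subsetI rows_indep_empty[of d p]]
  obtain C where C: "C \<subseteq> B" "rows_indep d p C" "erow d p ` B \<subseteq> FV.span (erow d p ` C)"
    by (elim exE conjE) (rule that)
  have finC: "finite C" using finite_subset[OF C(1) finB] .
  have "FV.span (erow d p ` B) \<subseteq> FV.span (erow d p ` C)"
    using FV.span_mono[OF C(3)] unfolding FV.span_span .
  then have "erow d p ` A \<subseteq> FV.span (erow d p ` C)" using sp by blast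
  moreover have iA: "inj_on (erow d p) A \<and> FV.independent (erow d p ` A)" by (rule rows_indep_imp[OF finA indA])
  moreover have "finite (erow d p ` C)" using finC by simp
  ultimately have "card (erow d p ` A) \<le> card (erow d p ` C)"
    using FV.independent_span_bound[of "erow d p ` C" "erow d p ` A"] by blast
  moreover have "card (erow d p ` A) = card A" using iA card_image by blast
  moreover have "card (erow d p ` C) \<le> card C" using finC by (rule card_image_le)
  moreover have "card C \<le> rig_rank d p B" using rig_rank_ge[OF finB C(1,2)] .
  ultimately show ?thesis by linarith
qed

lemma rows_basis_card:
  assumes fin: "finite F" and sub: "A0 \<subseteq> F" and ind0: "rows_indep d p A0"
  shows "\<exists>A. A0 \<subseteq> A \<and> A \<subseteq> F \<and> rows_indep d p A \<and> card A = rig_rank d p F"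
proof -
  from rows_basis_ext[OF assms]
  obtain A where A: "A0 \<subseteq> A" "A \<subseteq> F" "rows_indep d p A" "erow d p ` F \<subseteq> FV.span (erow d p ` A)"
    by (elim exE conjE) (rule that)
  have finA: "finite A" using finite_subset[OF A(2) fin] .
  obtain F' where F': "F' \<subseteq> F" "rows_indep d p F'" "card F' = rig_rank d p F" using rig_rank_obtain[OF fin] by blast
  have "finite F'" using finite_subset[OF F'(1) fin] .
  moreover have "erow d p ` F' \<subseteq> FV.span (erow d p ` A)" using F'(1) A(4) by blast
  ultimately have "card F' \<le> rig_rank d p A" using rows_span_bound[OF _ finA F'(2)] by blast
  also have "\<dots> = card A" using rows_indep_iff_rank[OF finA] A(3) by simp
  finally have "rig_rank d p F \<le> card A" using F'(3) by simp
  moreover have "card A \<le> rig_rank d p F" using rig_rank_ge[OF fin A(2,3)] .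
  ultimately show ?thesis using A by (intro exI[of _ A]) auto
qed

definition gram :: "nat \<Rightarrow> ('a \<Rightarrow> nat \<Rightarrow> real) \<Rightarrow> (nat \<Rightarrow> 'a set) \<Rightarrow> nat \<Rightarrow> 'a set \<Rightarrow> real mat" where
  "gram d p f n W = mat n n (\<lambda>(i, j). \<Sum>cl\<in>W \<times> {..<d}. erow d p (f i) cl * erow d p (f j) cl)"

lemma erow_outside: "e \<subseteq> W \<Longrightarrow> cl \<notin> W \<times> {..<d} \<Longrightarrow> erow d p e cl = 0"
  unfolding erow_def rig_entry_def by (cases cl) auto

lemma gram_mult:
  assumes "i < n" "dim_vec v = n"
  shows "(gram d p f n W *\<^sub>v v) $ i = (\<Sum>j\<in>{0..<n}. (\<Sum>cl\<in>W \<times> {..<d}. erow d p (f i) cl * erow d p (f j) cl) * v $ j)"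
  using assms unfolding gram_def by (auto simp: scalar_prod_def intro!: sum.cong)

lemma gram_indep:
  assumes finW: "finite W" and sub: "\<forall>i<n. f i \<subseteq> W" and inj: "inj_on f {0..<n}"
    and det: "det (gram d p f n W) \<noteq> 0"
  shows "rows_indep d p (f ` {0..<n})"
  unfolding rows_indep_alt
proof (intro allI impI)
  fix c assume s: "(\<Sum>e\<in>f ` {0..<n}. sc (c e) (erow d p e)) = 0"
  have Q: "(\<Sum>j\<in>{0..<n}. c (f j) * erow d p (f j) cl) = 0" for cl
  proof -
    have "(\<Sum>j\<in>{0..<n}. c (f j) * erow d p (f j) cl) = (\<Sum>e\<in>f ` {0..<n}. sc (c e) (erow d p e)) cl"
      unfolding fsum_apply sum.reindex[OF inj] sc_def by simp
    then show ?thesis using s by (simp add: func_zero)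
  qed
  define v where "v = vec n (\<lambda>j. c (f j))"
  have "gram d p f n W *\<^sub>v v = 0\<^sub>v n"
  proof (rule eq_vecI)
    fix i assume "i < dim_vec (0\<^sub>v n :: real vec)"
    then have i: "i < n" by simp
    have dv: "dim_vec v = n" unfolding v_def by simp
    have "(gram d p f n W *\<^sub>v v) $ i = (\<Sum>j\<in>{0..<n}. (\<Sum>cl\<in>W \<times> {..<d}. erow d p (f i) cl * erow d p (f j) cl) * v $ j)"
      by (rule gram_mult[OF i dv])
    also have "\<dots> = (\<Sum>j\<in>{0..<n}. (\<Sum>cl\<in>W \<times> {..<d}. erow d p (f i) cl * erow d p (f j) cl) * c (f j))"
      unfolding v_def by (intro sum.cong refl) simp
    also have "\<dots> = (\<Sum>cl\<in>W \<times> {..<d}. erow d p (f i) cl * (\<Sum>j\<in>{0..<n}. c (f j) * erow d p (f j) cl))"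
      unfolding sum_distrib_right sum_distrib_left by (subst sum.swap) (simp add: mult_ac)
    also have "\<dots> = 0" using Q by simp
    finally show "(gram d p f n W *\<^sub>v v) $ i = 0\<^sub>v n $ i" using i by simp
  next
    show "dim_vec (gram d p f n W *\<^sub>v v) = dim_vec (0\<^sub>v n :: real vec)" unfolding gram_def by simp
  qed
  moreover have "gram d p f n W \<in> carrier_mat n n" unfolding gram_def by simp
  ultimately have "v = 0\<^sub>v n" using det det_0_iff_vec_prod_zero[of "gram d p f n W" n] vec_carrier[of n "\<lambda>j. c (f j)"] unfolding v_def by blast
  then have "c (f j) = 0" if "j < n" for j using that unfolding v_def
    by (metis index_vec index_zero_vec(1))
  then show "\<forall>e\<in>f ` {0..<n}. c e = 0" by auto
qed

lemma indep_gram: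
  assumes finW: "finite W" and sub: "\<forall>i<n. f i \<subseteq> W" and inj: "inj_on f {0..<n}"
    and ind: "rows_indep d p (f ` {0..<n})"
  shows "det (gram d p f n W) \<noteq> 0"
proof
  assume "det (gram d p f n W) = 0"
  moreover have "gram d p f n W \<in> carrier_mat n n" unfolding gram_def by simp
  ultimately obtain v where v: "v \<in> carrier_vec n" "v \<noteq> 0\<^sub>v n" "gram d p f n W *\<^sub>v v = 0\<^sub>v n"
    using det_0_iff_vec_prod_zero by blast
  define Q where "Q cl = (\<Sum>i\<in>{0..<n}. v $ i * erow d p (f i) cl)" for cl
  have comp: "(\<Sum>j\<in>{0..<n}. (\<Sum>cl\<in>W \<times> {..<d}. erow d p (f i) cl * erow d p (f j) cl) * v $ j) = 0" if "i < n" for i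
  proof -
    have dv: "dim_vec v = n" using v(1) by (rule carrier_vecD)
    have "(gram d p f n W *\<^sub>v v) $ i = 0" using v(3) that by simp
    moreover have "(gram d p f n W *\<^sub>v v) $ i = (\<Sum>j\<in>{0..<n}. (\<Sum>cl\<in>W \<times> {..<d}. erow d p (f i) cl * erow d p (f j) cl) * v $ j)"
      by (rule gram_mult[OF that dv])
    ultimately show ?thesis by simp
  qed
  have "(\<Sum>cl\<in>W \<times> {..<d}. Q cl * Q cl) = (\<Sum>i\<in>{0..<n}. v $ i * (\<Sum>j\<in>{0..<n}. (\<Sum>cl\<in>W \<times> {..<d}. erow d p (f i) cl * erow d p (f j) cl) * v $ j))"
  proof -
    have "(\<Sum>cl\<in>W \<times> {..<d}. Q cl * Q cl) = (\<Sum>cl\<in>W \<times> {..<d}. \<Sum>i\<in>{0..<n}. \<Sum>j\<in>{0..<n}. v $ i * (erow d p (f i) cl * erow d p (f j) cl * v $ j))"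
      unfolding Q_def sum_product by (simp add: mult_ac)
    also have "\<dots> = (\<Sum>i\<in>{0..<n}. \<Sum>cl\<in>W \<times> {..<d}. \<Sum>j\<in>{0..<n}. v $ i * (erow d p (f i) cl * erow d p (f j) cl * v $ j))"
      by (rule sum.swap)
    also have "\<dots> = (\<Sum>i\<in>{0..<n}. \<Sum>j\<in>{0..<n}. \<Sum>cl\<in>W \<times> {..<d}. v $ i * (erow d p (f i) cl * erow d p (f j) cl * v $ j))"
      by (intro sum.cong refl, rule sum.swap)
    also have "\<dots> = (\<Sum>i\<in>{0..<n}. v $ i * (\<Sum>j\<in>{0..<n}. (\<Sum>cl\<in>W \<times> {..<d}. erow d p (f i) cl * erow d p (f j) cl) * v $ j))"
      unfolding sum_distrib_left sum_distrib_right by simp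
    finally show ?thesis .
  qed
  also have "\<dots> = 0" using comp by simp
  finally have sq0: "(\<Sum>cl\<in>W \<times> {..<d}. Q cl * Q cl) = 0" .
  have Q0: "Q cl = 0" for cl
  proof (cases "cl \<in> W \<times> {..<d}")
    case True
    have "\<forall>cl\<in>W \<times> {..<d}. Q cl * Q cl = 0"
      using sum_nonneg_eq_0_iff[of "W \<times> {..<d}" "\<lambda>cl. Q cl * Q cl"] sq0 finW by simp
    then show ?thesis using True by (cases cl) auto
  next
    case False
    have "erow d p (f i) cl = 0" if "i \<in> {0..<n}" for i
      using erow_outside[of "f i" W cl d p] sub that False by auto
    then show ?thesis unfolding Q_def by simp
  qed
  define c where "c e = v $ (the_inv_into {0..<n} f e)" for e
  have "(\<Sum>e\<in>f ` {0..<n}. sc (c e) (erow d p e)) = 0"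
  proof (rule ext)
    fix cl
    have "(\<Sum>e\<in>f ` {0..<n}. sc (c e) (erow d p e)) cl = (\<Sum>i\<in>{0..<n}. c (f i) * erow d p (f i) cl)"
      unfolding fsum_apply sum.reindex[OF inj] sc_def by simp
    also have "\<dots> = Q cl" unfolding Q_def c_def using the_inv_into_f_f[OF inj] by (intro sum.cong refl) auto
    finally show "(\<Sum>e\<in>f ` {0..<n}. sc (c e) (erow d p e)) cl = 0 cl" using Q0 by (simp add: func_zero)
  qed
  then have "\<forall>e\<in>f ` {0..<n}. c e = 0" using ind unfolding rows_indep_alt by blast
  then have "v $ i = 0" if "i < n" for i
  proof -
    have "i \<in> {0..<n}" using that by simp
    then have "c (f i) = 0" using \<open>\<forall>e\<in>f ` {0..<n}. c e = 0\<close> by blast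
    then show ?thesis unfolding c_def using the_inv_into_f_f[OF inj \<open>i \<in> {0..<n}\<close>] by simp
  qed
  then have "v = 0\<^sub>v n" using v(1) by (intro eq_vecI) auto
  then show False using v(2) by simp
qed

lemma qpoly_erow:
  assumes finW: "finite W" and e: "e \<subseteq> W" and cl: "cl \<in> W \<times> {..<d}"
  shows "qpoly (W \<times> {..<d}) (\<lambda>x. erow d (\<lambda>u k. x (u, k)) e cl)"
proof -
  obtain w k where wk: "cl = (w, k)" "w \<in> W" "k < d" using cl by auto
  have finI: "finite (W \<times> {..<d})" using finW by simp
  show ?thesis
  proof (cases "w \<in> e")
    case True
    have "qpoly (W \<times> {..<d}) (\<lambda>x. \<Sum>z\<in>e - {w}. x (w, k) - x (z, k))"
    proof (rule qpoly_sum[OF _ finI])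
      show "finite (e - {w})" using finite_subset[OF e finW] by simp
    next
      fix z assume "z \<in> e - {w}"
      then have "(z, k) \<in> W \<times> {..<d}" using e wk by auto
      then show "qpoly (W \<times> {..<d}) (\<lambda>x. x (w, k) - x (z, k))"
        using wk finI by (intro qpoly_diff qpoly_var) auto
    qed
    then show ?thesis unfolding erow_def rig_entry_def wk using True wk by simp
  next
    case False
    then show ?thesis unfolding erow_def rig_entry_def wk using qpoly_const[of 0] wk by simp
  qed
qed

lemma qpoly_gram_det:
  assumes finW: "finite W" and sub: "\<forall>i<n. f i \<subseteq> W"
  shows "qpoly (W \<times> {..<d}) (\<lambda>x. det (gram d (\<lambda>u k. x (u, k)) f n W))"
proof -
  have finI: "finite (W \<times> {..<d})" using finW by simp
  define P where "P = {\<pi>. \<pi> permutes {0..<n}}"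
  have eq: "det (gram d (\<lambda>u k. x (u, k)) f n W) =
     (\<Sum>\<pi>\<in>P. of_int (sign \<pi>) * (\<Prod>i\<in>{0..<n}. \<Sum>cl\<in>W \<times> {..<d}. erow d (\<lambda>u k. x (u, k)) (f i) cl * erow d (\<lambda>u k. x (u, k)) (f (\<pi> i)) cl))" for x
  proof -
    have "gram d (\<lambda>u k. x (u, k)) f n W \<in> carrier_mat n n" unfolding gram_def by simp
    then have "det (gram d (\<lambda>u k. x (u, k)) f n W) = (\<Sum>\<pi>\<in>P. of_int (sign \<pi>) * (\<Prod>i\<in>{0..<n}. gram d (\<lambda>u k. x (u, k)) f n W $$ (i, \<pi> i)))"
      unfolding P_def by (rule det_def')
    also have "\<dots> = (\<Sum>\<pi>\<in>P. of_int (sign \<pi>) * (\<Prod>i\<in>{0..<n}. \<Sum>cl\<in>W \<times> {..<d}. erow d (\<lambda>u k. x (u, k)) (f i) cl * erow d (\<lambda>u k. x (u, k)) (f (\<pi> i)) cl))"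
    proof (intro sum.cong refl arg_cong2[where f = "(*)"] prod.cong)
      fix \<pi> i assume "\<pi> \<in> P" "i \<in> {0..<n}"
      then have "\<pi> i < n" unfolding P_def using permutes_in_image by fastforce
      then show "gram d (\<lambda>u k. x (u, k)) f n W $$ (i, \<pi> i) = (\<Sum>cl\<in>W \<times> {..<d}. erow d (\<lambda>u k. x (u, k)) (f i) cl * erow d (\<lambda>u k. x (u, k)) (f (\<pi> i)) cl)"
        using \<open>i \<in> {0..<n}\<close> unfolding gram_def by simp
    qed
    finally show ?thesis .
  qed
  have "qpoly (W \<times> {..<d}) (\<lambda>x. \<Sum>\<pi>\<in>P. of_int (sign \<pi>) * (\<Prod>i\<in>{0..<n}. \<Sum>cl\<in>W \<times> {..<d}. erow d (\<lambda>u k. x (u, k)) (f i) cl * erow d (\<lambda>u k. x (u, k)) (f (\<pi> i)) cl))"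
  proof (rule qpoly_sum[OF _ finI])
    show "finite P" unfolding P_def by (rule finite_permutations) simp
  next
    fix \<pi> assume pi: "\<pi> \<in> P"
    show "qpoly (W \<times> {..<d}) (\<lambda>x. of_int (sign \<pi>) * (\<Prod>i\<in>{0..<n}. \<Sum>cl\<in>W \<times> {..<d}. erow d (\<lambda>u k. x (u, k)) (f i) cl * erow d (\<lambda>u k. x (u, k)) (f (\<pi> i)) cl))"
    proof (rule qpoly_mult[OF qpoly_const _ finI])
      show "of_int (sign \<pi>) \<in> \<rat>" by simp
    next
      show "qpoly (W \<times> {..<d}) (\<lambda>x. \<Prod>i\<in>{0..<n}. \<Sum>cl\<in>W \<times> {..<d}. erow d (\<lambda>u k. x (u, k)) (f i) cl * erow d (\<lambda>u k. x (u, k)) (f (\<pi> i)) cl)"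
      proof (rule qpoly_prod[OF _ finI])
        fix i assume i: "i \<in> {0..<n}"
        then have "\<pi> i < n" using pi unfolding P_def using permutes_in_image by fastforce
        then have s: "f i \<subseteq> W" "f (\<pi> i) \<subseteq> W" using sub i by auto
        show "qpoly (W \<times> {..<d}) (\<lambda>x. \<Sum>cl\<in>W \<times> {..<d}. erow d (\<lambda>u k. x (u, k)) (f i) cl * erow d (\<lambda>u k. x (u, k)) (f (\<pi> i)) cl)"
          using finI s by (intro qpoly_sum qpoly_mult qpoly_erow finW) auto
      qed simp
    qed
  qed
  then show ?thesis unfolding eq .
qed

lemma rows_indep_generic:
  assumes finW: "finite W" and gen: "generic d W p" and finF: "finite F"
    and sub: "\<forall>e\<in>F. e \<subseteq> W" and indq: "rows_indep d q F"
  shows "rows_indep d p F"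
proof -
  obtain f where f: "bij_betw f {0..<card F} F" using ex_bij_betw_nat_finite[OF finF] by blast
  define n where "n = card F"
  have inj: "inj_on f {0..<n}" and img: "f ` {0..<n} = F" using f unfolding bij_betw_def n_def by auto
  have subf: "\<forall>i<n. f i \<subseteq> W" using sub img by auto
  define P where "P x = det (gram d (\<lambda>u k. x (u, k)) f n W)" for x :: "'a \<times> nat \<Rightarrow> real"
  have qp: "qpoly (W \<times> {..<d}) P" unfolding P_def by (rule qpoly_gram_det[OF finW subf])
  have "P (\<lambda>(u, k). q u k) \<noteq> 0"
    unfolding P_def using indep_gram[OF finW subf inj] indq img by simp
  moreover have "alg_indep_Q (W \<times> {..<d}) (\<lambda>(u, k). p u k)" using gen unfolding generic_def .
  ultimately have "P (\<lambda>(u, k). p u k) \<noteq> 0" using qpoly_generic[OF _ qp] by blast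
  then have "det (gram d p f n W) \<noteq> 0" unfolding P_def by simp
  then show ?thesis using gram_indep[OF finW subf inj] img by simp
qed

lemma gen_rank_ge:
  assumes finW: "finite W" and finF: "finite F" and sub: "\<forall>e\<in>F. e \<subseteq> W"
  shows "rig_rank d q F \<le> gen_rank d W F"
proof -
  obtain F' where F': "F' \<subseteq> F" "rows_indep d q F'" "card F' = rig_rank d q F"
    using rig_rank_obtain[OF finF] by blast
  have "rows_indep d (SOME p. generic d W p) F'"
    using rows_indep_generic[OF finW generic_some[OF finW] finite_subset[OF F'(1) finF] _ F'(2)] F'(1) sub by blast
  then show ?thesis unfolding gen_rank_def using rig_rank_ge[OF finF F'(1)] F'(3) by simp
qed

lemma generic_coord:
  assumes gen: "generic d W p" and finW: "finite W" and ab: "a \<in> W" "b \<in> W" "a \<noteq> b" and k: "k < d"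
  shows "p a k \<noteq> p b k"
proof
  assume eq: "p a k = p b k"
  have finI: "finite (W \<times> {..<d})" using finW by simp
  define P where "P x = x (a, k) - x (b, k)" for x :: "'a \<times> nat \<Rightarrow> real"
  have qp: "qpoly (W \<times> {..<d}) P" unfolding P_def using ab k finI by (intro qpoly_diff qpoly_var) auto
  have "P (\<lambda>(u, k). p u k) = 0" unfolding P_def using eq by simp
  then have "P (\<lambda>c. if c = (a, k) then 1 else 0) = 0"
    using qpoly_generic[OF _ qp] gen unfolding generic_def by blast
  then show False unfolding P_def using ab by simp
qed

definition cone :: "'a \<Rightarrow> 'a set \<Rightarrow> 'a set set" where
  "cone v W = {{v, u} | u. u \<in> W}"

lemma rig_entry_shift: "rig_entry (\<lambda>u k. p u k - s k) = rig_entry p"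
  unfolding rig_entry_def by (intro ext) simp

lemma rig_entry_outside: "w \<notin> e \<Longrightarrow> rig_entry p e w k = 0"
  unfolding rig_entry_def by simp

lemma rig_entry_pair: "u \<noteq> z \<Longrightarrow> rig_entry p {u, z} u k = p u k - p z k"
proof -
  assume "u \<noteq> z"
  then have "{u, z} - {u} = {z}" by auto
  then show ?thesis unfolding rig_entry_def by simp
qed

lemma card2_obtain: "card e = 2 \<Longrightarrow> u \<in> e \<Longrightarrow> \<exists>z. e = {u, z} \<and> z \<noteq> u"
  by (auto simp: card_2_iff)

lemma rig_entry_colsum:
  assumes "card e = 2" "e \<subseteq> U" "finite U"
  shows "(\<Sum>w\<in>U. rig_entry p e w k) = 0"
proof -
  obtain a b where ab: "e = {a, b}" "a \<noteq> b" using assms(1) by (auto simp: card_2_iff)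
  have "(\<Sum>w\<in>U. rig_entry p e w k) = (\<Sum>w\<in>e. rig_entry p e w k)"
    by (rule sum.mono_neutral_right) (use assms in \<open>auto simp: rig_entry_outside\<close>)
  also have "\<dots> = rig_entry p e a k + rig_entry p e b k" using ab by simp
  also have "\<dots> = 0" using ab rig_entry_pair[of a b p k] rig_entry_pair[of b a p k]
    by (simp add: insert_commute)
  finally show ?thesis .
qed

lemma card_cone: "v \<notin> W \<Longrightarrow> finite W \<Longrightarrow> card (cone v W) = card W"
proof -
  assume v: "v \<notin> W" and fin: "finite W"
  have "cone v W = (\<lambda>u. {v, u}) ` W" unfolding cone_def by auto
  moreover have "inj_on (\<lambda>u. {v, u}) W"
  proof (rule inj_onI)
    fix a b assume "a \<in> W" "b \<in> W" "{v, a} = {v, b}"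
    then show "a = b" using v by (metis doubleton_eq_iff)
  qed
  ultimately show ?thesis by (simp add: card_image)
qed

lemma cone_indep:
  assumes finW: "finite W" and v: "v \<notin> W" and lam: "\<And>u. u \<in> W \<Longrightarrow> p u d \<noteq> p v d"
  shows "rows_indep (Suc d) p (cone v W)"
  unfolding rows_indep_def
proof (intro allI impI ballI)
  fix c e
  assume H: "\<forall>w k. k < Suc d \<longrightarrow> (\<Sum>e\<in>cone v W. c e * rig_entry p e w k) = 0" and e: "e \<in> cone v W"
  then obtain u where u: "u \<in> W" "e = {v, u}" unfolding cone_def by auto
  have uv: "u \<noteq> v" using u v by auto
  have "(\<Sum>e'\<in>cone v W. c e' * rig_entry p e' u d) = (\<Sum>e'\<in>cone v W. if e' = e then c e * (p u d - p v d) else 0)"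
  proof (intro sum.cong refl)
    fix e' assume "e' \<in> cone v W"
    then obtain u' where u': "u' \<in> W" "e' = {v, u'}" unfolding cone_def by auto
    show "c e' * rig_entry p e' u d = (if e' = e then c e * (p u d - p v d) else 0)"
    proof (cases "u' = u")
      case True
      then show ?thesis using u u' uv rig_entry_pair[of u v p d] by (simp add: insert_commute)
    next
      case False
      then have "u \<notin> e'" using u' uv by auto
      moreover have "e' \<noteq> e" using False u u' v by (metis doubleton_eq_iff)
      ultimately show ?thesis by (simp add: rig_entry_outside)
    qed
  qed
  also have "\<dots> = c e * (p u d - p v d)" using e finW unfolding cone_def by (simp add: sum.delta)
  finally have "c e * (p u d - p v d) = 0" using H by simp
  then show "c e = 0" using lam[OF u(1)] by simp
qed

lemma scale_transfer:
  assumes finW: "finite W" and v: "v \<notin> W"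
    and Hs: "\<forall>e\<in>B. e \<subseteq> W \<and> card e = 2"
    and lamnz0: "\<forall>u\<in>W. p u d \<noteq> p v d"
    and indA: "rows_indep (Suc d) p (B \<union> cone v W)"
  shows "rows_indep d (\<lambda>u k. (p u k - p v k) / (p u d - p v d)) B"
proof -
  define x where "x u k = p u k - p v k" for u k
  define lam where "lam u = x u d" for u
  define y where "y u k = (p u k - p v k) / (p u d - p v d)" for u k
  have lamnz: "lam u \<noteq> 0" if "u \<in> W" for u using lamnz0 that unfolding lam_def x_def by auto
  have xy: "x u k = lam u * y u k" if "u \<in> W" for u k
    using lamnz[OF that] unfolding lam_def x_def y_def by simp
  have yd: "y u d = 1" if "u \<in> W" for u using lamnz[OF that] unfolding lam_def x_def y_def by simp
  have rx: "rig_entry p = rig_entry x" unfolding x_def using rig_entry_shift[of p "\<lambda>k. p v k"] by simp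
  have finB: "finite B"
  proof -
    have "B \<subseteq> Pow W" using Hs by auto
    then show ?thesis using finW by (simp add: finite_subset)
  qed
  define Cn where "Cn = cone v W"
  have finCn: "finite Cn" unfolding Cn_def cone_def using finW by simp
  have disj: "B \<inter> Cn = {}" unfolding Cn_def cone_def using Hs v by auto
  define U where "U = insert v W"
  have finU: "finite U" unfolding U_def using finW by simp
  have edgesU: "e \<subseteq> U \<and> card e = 2" if "e \<in> B \<union> Cn" for e
    using that Hs v unfolding U_def Cn_def cone_def by (auto simp: card_2_iff)
  define Lam where "Lam e = (\<Prod>z\<in>e. lam z)" for e
  define Dv where "Dv e u = (if u \<in> e then \<Sum>z\<in>e-{u}. lam u - lam z else 0)" for e u
  show ?thesis
    unfolding y_def[symmetric] rows_indep_def
  proof (intro allI impI ballI)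
    fix c e0
    assume Hc: "\<forall>w k. k < d \<longrightarrow> (\<Sum>e\<in>B. c e * rig_entry y e w k) = 0" and e0: "e0 \<in> B"
    define C1 where "C1 e = c e / Lam e" for e
    define g where "g u = - (\<Sum>e\<in>B. C1 e * Dv e u) / lam u" for u
    define C where "C e = (if e \<in> B then C1 e else g (SOME u. u \<in> W \<and> e = {v, u}))" for e
    have Ccone: "C {v, u} = g u" if "u \<in> W" for u
    proof -
      have "{v, u} \<notin> B" using Hs v by auto
      moreover have "(SOME u'. u' \<in> W \<and> {v, u} = {v, u'}) = u"
      proof (rule some_equality)
        show "u \<in> W \<and> {v, u} = {v, u}" using that by simp
      next
        fix u' assume "u' \<in> W \<and> {v, u} = {v, u'}"
        then show "u' = u" using v that by (metis doubleton_eq_iff)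
      qed
      ultimately show ?thesis unfolding C_def by simp
    qed
    have colu: "(\<Sum>e\<in>B \<union> Cn. C e * rig_entry x e u k) = 0" if u: "u \<in> W" and k: "k < Suc d" for u k
    proof -
      have uv: "u \<noteq> v" using u v by auto
      have S1: "(\<Sum>e\<in>Cn. C e * rig_entry x e u k) = g u * x u k"
      proof -
        have "(\<Sum>e\<in>Cn. C e * rig_entry x e u k) = (\<Sum>e\<in>Cn. if e = {v, u} then g u * x u k else 0)"
        proof (intro sum.cong refl)
          fix e assume "e \<in> Cn"
          then obtain u' where u': "u' \<in> W" "e = {v, u'}" unfolding Cn_def cone_def by auto
          show "C e * rig_entry x e u k = (if e = {v, u} then g u * x u k else 0)"
          proof (cases "u' = u")
            case True
            have "x v k = 0" unfolding x_def by simp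
            then show ?thesis using True u' uv Ccone[OF u] rig_entry_pair[of u v x k] by (simp add: insert_commute)
          next
            case False
            then have "u \<notin> e" using u' uv by auto
            moreover have "e \<noteq> {v, u}" using False u u' v by (metis doubleton_eq_iff)
            ultimately show ?thesis by (simp add: rig_entry_outside)
          qed
        qed
        also have "\<dots> = g u * x u k"
        proof -
          have mem: "{v, u} \<in> Cn" unfolding Cn_def cone_def using u by blast
          show ?thesis using mem finCn by (simp add: sum.delta)
        qed
        finally show ?thesis .
      qed
      have per: "lam u * (C e * rig_entry x e u k) = c e * rig_entry y e u k + lam u * y u k * (C e * Dv e u)"
        if e: "e \<in> B" for e
      proof (cases "u \<in> e")
        case True
        obtain z where z: "e = {u, z}" "z \<noteq> u" using card2_obtain[OF _ True] Hs e by blast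
        have zW: "z \<in> W" using Hs e z by auto
        have Ce: "C e = c e / (lam u * lam z)"
          unfolding C_def C1_def Lam_def using e z by simp
        have D: "Dv e u = lam u - lam z"
        proof -
          have "e - {u} = {z}" using z by auto
          then show ?thesis unfolding Dv_def using True by simp
        qed
        have rxe: "rig_entry x e u k = x u k - x z k" using z rig_entry_pair by metis
        have rye: "rig_entry y e u k = y u k - y z k" using z rig_entry_pair by metis
        show ?thesis unfolding Ce D rxe rye xy[OF u] xy[OF zW]
          using lamnz[OF u] lamnz[OF zW] by (simp add: field_simps)
      next
        case False
        then show ?thesis unfolding Dv_def by (simp add: rig_entry_outside)
      qed
      have gu: "lam u * (g u * x u k) = - (\<Sum>e\<in>B. C e * Dv e u) * lam u * y u k"
      proof -
        have "(\<Sum>e\<in>B. C1 e * Dv e u) = (\<Sum>e\<in>B. C e * Dv e u)" unfolding C_def by simp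
        then show ?thesis unfolding g_def xy[OF u] using lamnz[OF u] by (simp add: field_simps)
      qed
      have "lam u * (\<Sum>e\<in>B \<union> Cn. C e * rig_entry x e u k)
          = lam u * (\<Sum>e\<in>B. C e * rig_entry x e u k) + lam u * (g u * x u k)"
        unfolding sum.union_disjoint[OF finB finCn disj] S1 by (simp add: distrib_left)
      also have "lam u * (\<Sum>e\<in>B. C e * rig_entry x e u k) = (\<Sum>e\<in>B. c e * rig_entry y e u k) + lam u * y u k * (\<Sum>e\<in>B. C e * Dv e u)"
        unfolding sum_distrib_left using per by (simp add: sum.distrib)
      finally have eq: "lam u * (\<Sum>e\<in>B \<union> Cn. C e * rig_entry x e u k) = (\<Sum>e\<in>B. c e * rig_entry y e u k)"
        unfolding gu by simp
      have "(\<Sum>e\<in>B. c e * rig_entry y e u k) = 0"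
      proof (cases "k < d")
        case True then show ?thesis using Hc by simp
      next
        case False
        then have kd: "k = d" using k by simp
        have "rig_entry y e u d = 0" if "e \<in> B" for e
        proof -
          have "\<forall>z\<in>e. y z d = 1" using Hs that yd by blast
          then show ?thesis unfolding rig_entry_def using u yd by auto
        qed
        then show ?thesis using kd by simp
      qed
      then show ?thesis using eq lamnz[OF u] by simp
    qed
    have allcol: "(\<Sum>e\<in>B \<union> Cn. C e * rig_entry x e w k) = 0" if k: "k < Suc d" for w k
    proof (cases "w \<in> U")
      case False
      then have "rig_entry x e w k = 0" if "e \<in> B \<union> Cn" for e
        using edgesU[OF that] by (auto intro: rig_entry_outside)
      then show ?thesis by simp
    next
      case True
      have tot: "(\<Sum>w'\<in>U. \<Sum>e\<in>B \<union> Cn. C e * rig_entry x e w' k) = 0"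
      proof -
        have "(\<Sum>w'\<in>U. \<Sum>e\<in>B \<union> Cn. C e * rig_entry x e w' k) = (\<Sum>e\<in>B \<union> Cn. C e * (\<Sum>w'\<in>U. rig_entry x e w' k))"
          unfolding sum_distrib_left by (rule sum.swap)
        also have "\<dots> = 0"
        proof (rule sum.neutral, rule ballI)
          fix e assume "e \<in> B \<union> Cn"
          then have "(\<Sum>w'\<in>U. rig_entry x e w' k) = 0" using edgesU rig_entry_colsum finU by blast
          then show "C e * (\<Sum>w'\<in>U. rig_entry x e w' k) = 0" by simp
        qed
        finally show ?thesis .
      qed
      have "(\<Sum>w'\<in>U. \<Sum>e\<in>B \<union> Cn. C e * rig_entry x e w' k) = (\<Sum>e\<in>B \<union> Cn. C e * rig_entry x e v k) + (\<Sum>w'\<in>W. \<Sum>e\<in>B \<union> Cn. C e * rig_entry x e w' k)"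
        unfolding U_def using finW v by simp
      also have "(\<Sum>w'\<in>W. \<Sum>e\<in>B \<union> Cn. C e * rig_entry x e w' k) = 0" using colu k by simp
      finally have cv: "(\<Sum>e\<in>B \<union> Cn. C e * rig_entry x e v k) = 0" using tot by simp
      show ?thesis
      proof (cases "w = v")
        case True then show ?thesis using cv by simp
      next
        case False then have "w \<in> W" using True unfolding U_def by simp
        then show ?thesis using colu k by simp
      qed
    qed
    have "\<forall>e\<in>B \<union> Cn. C e = 0" using indA allcol unfolding rows_indep_def rx Cn_def by blast
    then have "C e0 = 0" using e0 by blast
    then have "C1 e0 = 0" using e0 unfolding C_def by simp
    moreover have "Lam e0 \<noteq> 0"
    proof -
      have "e0 \<subseteq> W" using Hs e0 by auto
      then have "finite e0" using finW by (rule finite_subset)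
      then show ?thesis unfolding Lam_def using lamnz \<open>e0 \<subseteq> W\<close> by (auto simp: prod_zero_iff)
    qed
    ultimately show "c e0 = 0" unfolding C1_def by simp
  qed
qed

lemma finite_edges: "finite W \<Longrightarrow> \<forall>e\<in>F. e \<subseteq> W \<Longrightarrow> finite F"
proof -
  assume "finite W" "\<forall>e\<in>F. e \<subseteq> W"
  then have "F \<subseteq> Pow W" by auto
  then show "finite F" using \<open>finite W\<close> by (simp add: finite_subset)
qed

lemma cone_le:
  assumes finW: "finite W" and v: "v \<notin> W" and Hs: "\<forall>e\<in>H. e \<subseteq> W \<and> card e = 2"
  shows "gen_rank (Suc d) (insert v W) (H \<union> cone v W) \<le> gen_rank d W H + card W"
proof -
  define p where "p = (SOME p. generic (Suc d) (insert v W) p)"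
  have finU: "finite (insert v W)" using finW by simp
  have gen: "generic (Suc d) (insert v W) p" unfolding p_def by (rule generic_some[OF finU])
  have lam: "\<forall>u\<in>W. p u d \<noteq> p v d"
  proof
    fix u assume "u \<in> W"
    then show "p u d \<noteq> p v d" using generic_coord[OF gen finU, of u v d] v by auto
  qed
  have finH: "finite H" using finite_edges[OF finW] Hs by blast
  have finC: "finite (cone v W)" unfolding cone_def using finW by simp
  have finHC: "finite (H \<union> cone v W)" using finH finC by simp
  have ci: "rows_indep (Suc d) p (cone v W)" using cone_indep[OF finW v] lam by blast
  obtain A where A: "cone v W \<subseteq> A" "A \<subseteq> H \<union> cone v W" "rows_indep (Suc d) p A"
      "card A = rig_rank (Suc d) p (H \<union> cone v W)"
    using rows_basis_card[OF finHC _ ci] by blast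
  define B where "B = A \<inter> H"
  have AB: "A = B \<union> cone v W" unfolding B_def using A(1,2) by blast
  have Bs: "\<forall>e\<in>B. e \<subseteq> W \<and> card e = 2" using Hs unfolding B_def by blast
  have indB: "rows_indep d (\<lambda>u k. (p u k - p v k) / (p u d - p v d)) B"
    by (rule scale_transfer[of W v B p d, OF finW v Bs lam]) (use A(3) AB in simp)
  have BH: "B \<subseteq> H" unfolding B_def by blast
  have "card B \<le> rig_rank d (\<lambda>u k. (p u k - p v k) / (p u d - p v d)) H"
    by (rule rig_rank_ge[OF finH BH indB])
  also have "\<dots> \<le> gen_rank d W H" using gen_rank_ge[OF finW finH] Hs by blast
  finally have cB: "card B \<le> gen_rank d W H" .
  have disj: "B \<inter> cone v W = {}" unfolding cone_def using Bs v by auto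
  have finB: "finite B" using finite_subset[OF BH finH] .
  have "card A = card B + card W" unfolding AB card_Un_disjoint[OF finB finC disj] card_cone[OF v finW] ..
  moreover have "gen_rank (Suc d) (insert v W) (H \<union> cone v W) = card A"
    unfolding gen_rank_def p_def[symmetric] using A(4) by simp
  ultimately show ?thesis using cB by simp
qed

lemma gen_rank_vertex:
  assumes "finite W1" "finite W2" "\<forall>e\<in>F. e \<subseteq> W1" "\<forall>e\<in>F. e \<subseteq> W2"
  shows "gen_rank d W1 F = gen_rank d W2 F"
proof -
  have finF: "finite F" using finite_edges assms(1,3) by blast
  have "gen_rank d W1 F \<le> gen_rank d W2 F"
    unfolding gen_rank_def[of d W1] by (rule gen_rank_ge[OF assms(2) finF assms(4)])
  moreover have "gen_rank d W2 F \<le> gen_rank d W1 F"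
    unfolding gen_rank_def[of d W2] by (rule gen_rank_ge[OF assms(1) finF assms(3)])
  ultimately show ?thesis by simp
qed

lemma complete_edges_insert:
  assumes "v \<notin> W" shows "complete_edges (insert v W) = complete_edges W \<union> cone v W"
  unfolding complete_edges_def cone_def using assms by (auto simp: insert_commute)

lemma complete_edges_props: "e \<in> complete_edges W \<Longrightarrow> e \<subseteq> W \<and> card e = 2"
  unfolding complete_edges_def by auto

lemma complete_edges_card: "finite W \<Longrightarrow> card (complete_edges W) = card W choose 2"
proof -
  assume fin: "finite W"
  have "complete_edges W = {A. A \<subseteq> W \<and> card A = 2}"
    unfolding complete_edges_def by (auto simp: card_2_iff)
  then show ?thesis using n_subsets[OF fin, of 2] by simp
qed

lemma rig_rank_zero: "finite F \<Longrightarrow> rig_rank 0 p F = 0"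
proof -
  assume fin: "finite F"
  obtain F' where F': "F' \<subseteq> F" "rows_indep 0 p F'" "card F' = rig_rank 0 p F"
    using rig_rank_obtain[OF fin] by blast
  have "F' = {}"
  proof (rule ccontr)
    assume "F' \<noteq> {}"
    then obtain e where "e \<in> F'" by blast
    moreover have "\<forall>e\<in>F'. (\<lambda>_. 1::real) e = 0"
      using spec[OF F'(2)[unfolded rows_indep_def], of "\<lambda>_. 1"] by simp
    ultimately show False by simp
  qed
  then show ?thesis using F'(3) by simp
qed

lemma rank_ub_complete:
  "finite W \<Longrightarrow> d \<le> card W \<Longrightarrow> int (gen_rank d W (complete_edges W)) \<le> int d * int (card W) - int ((d + 1) choose 2)"
proof (induction d arbitrary: W)
  case 0
  have "finite (complete_edges W)" using finite_edges[OF 0(1)] complete_edges_props by blast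
  then show ?case unfolding gen_rank_def using rig_rank_zero by (simp add: binomial_eq_0)
next
  case (Suc d)
  have "W \<noteq> {}" using Suc.prems by auto
  then obtain v where v: "v \<in> W" by blast
  define W' where "W' = W - {v}"
  have finW': "finite W'" unfolding W'_def using Suc.prems by simp
  have vW': "v \<notin> W'" unfolding W'_def by simp
  have WW': "W = insert v W'" unfolding W'_def using v by auto
  have cW': "card W' = card W - 1" unfolding W'_def using v Suc.prems by simp
  have dW': "d \<le> card W'" using cW' Suc.prems by simp
  have Hs: "\<forall>e\<in>complete_edges W'. e \<subseteq> W' \<and> card e = 2" using complete_edges_props by blast
  have "gen_rank (Suc d) W (complete_edges W) = gen_rank (Suc d) (insert v W') (complete_edges W' \<union> cone v W')"
    unfolding WW' complete_edges_insert[OF vW'] ..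
  also have "\<dots> \<le> gen_rank d W' (complete_edges W') + card W'" by (rule cone_le[OF finW' vW' Hs])
  finally have "int (gen_rank (Suc d) W (complete_edges W)) \<le> int (gen_rank d W' (complete_edges W')) + int (card W')" by simp
  also have "\<dots> \<le> int d * int (card W') - int ((d + 1) choose 2) + int (card W')" using Suc.IH[OF finW' dW'] by simp
  also have "\<dots> = int (Suc d) * int (card W) - int ((Suc d + 1) choose 2)"
  proof -
    have "(Suc d + 1) choose 2 = (d + 1 choose 1) + (d + 1 choose 2)"
      by (simp add: numeral_2_eq_2)
    moreover have "int (card W) = int (card W') + 1" using cW' \<open>W \<noteq> {}\<close> Suc.prems(1)
      by (simp add: card_gt_0_iff Suc_leI of_nat_diff)
    ultimately show ?thesis by (simp add: algebra_simps)
  qed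
  finally show ?case .
qed

lemma rank_ub:
  assumes "finite W" "d \<le> card W" "F \<subseteq> complete_edges W"
  shows "int (gen_rank d W F) \<le> int d * int (card W) - int ((d + 1) choose 2)"
proof -
  have finK: "finite (complete_edges W)" using finite_edges[OF assms(1)] complete_edges_props by blast
  have "gen_rank d W F \<le> gen_rank d W (complete_edges W)"
    unfolding gen_rank_def by (rule rig_rank_mono[OF finK assms(3)])
  then show ?thesis using rank_ub_complete[OF assms(1,2)] by simp
qed

lemma R_indep_iff:
  "finite X \<Longrightarrow> R_indep d V X \<longleftrightarrow> rows_indep d (SOME p. generic d V p) X"
  unfolding R_indep_def gen_rank_def using rows_indep_iff_rank by metis

lemma ch2: "2 * (m choose 2) = m * (m - 1)"
proof (induction m)
  case 0 then show ?case by simp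
next
  case (Suc m)
  have "Suc m choose 2 = m + (m choose 2)" by (simp add: numeral_2_eq_2)
  then show ?case using Suc by (cases m) (auto simp: algebra_simps)
qed

lemma ch2_int: "2 * int (m choose 2) = int m * (int m - 1)"
proof -
  have "int (2 * (m choose 2)) = int (m * (m - 1))" using ch2 by metis
  then show ?thesis by (cases m) (auto simp: algebra_simps)
qed

lemma circuit_exists:
  assumes finV: "finite V" and Es: "\<forall>e\<in>E. e \<subseteq> V" and f: "f \<in> E"
    and eq: "gen_rank d V (E - {f}) = gen_rank d V E"
  shows "\<exists>C\<subseteq>E. R_circuit d V C \<and> f \<in> C"
proof -
  define p where "p = (SOME p. generic d V p)"
  have finE: "finite E" using finite_edges[OF finV Es] .
  have finEf: "finite (E - {f})" using finE by simp
  obtain B where B: "B \<subseteq> E - {f}" "rows_indep d p B" "card B = rig_rank d p (E - {f})"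
    using rows_basis_card[OF finEf empty_subsetI rows_indep_empty[of d p]] by blast
  have finB: "finite B" using finite_subset[OF B(1) finEf] .
  have fB: "f \<notin> B" using B(1) by blast
  have rkE: "rig_rank d p E = card B" using B(3) eq unfolding gen_rank_def p_def by simp
  have dep: "\<not> rows_indep d p (insert f B)"
  proof
    assume "rows_indep d p (insert f B)"
    moreover have "insert f B \<subseteq> E" using B(1) f by blast
    ultimately have "card (insert f B) \<le> rig_rank d p E" by (intro rig_rank_ge[OF finE])
    then show False using rkE fB finB by simp
  qed
  define D where "D = {C. C \<subseteq> insert f B \<and> \<not> rows_indep d p C}"
  have "insert f B \<in> D" unfolding D_def using dep by blast
  then obtain C where C: "C \<in> D" "\<forall>C'. C' \<in> D \<longrightarrow> card C \<le> card C'"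
    using ex_has_least_nat[of "\<lambda>C. C \<in> D" "insert f B" card] by blast
  have CfB: "C \<subseteq> insert f B" and Cdep: "\<not> rows_indep d p C" using C(1) unfolding D_def by auto
  have finfB: "finite (insert f B)" using finB by simp
  have finC: "finite C" using finite_subset[OF CfB finfB] .
  have fC: "f \<in> C"
  proof (rule ccontr)
    assume "f \<notin> C"
    then have "C \<subseteq> B" using CfB by blast
    then have "rows_indep d p C" using rows_indep_subset[OF finB B(2)] by blast
    then show False using Cdep by simp
  qed
  have circ: "R_circuit d V C"
    unfolding R_circuit_def
  proof (intro conjI allI impI)
    show "\<not> R_indep d V C" using Cdep R_indep_iff[OF finC] unfolding p_def by simp
  next
    fix C' assume "C' \<subset> C"
    have fin'1: "finite C'" using finite_subset[of C' C] \<open>C' \<subset> C\<close> finC by blast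
    have fin'2: "card C' < card C" using psubset_card_mono[OF finC \<open>C' \<subset> C\<close>] .
    have "C' \<subseteq> insert f B" using \<open>C' \<subset> C\<close> CfB by blast
    have "C' \<notin> D" using C(2) fin'2 by (meson not_le)
    then have ri: "rows_indep d p C'" using \<open>C' \<subseteq> insert f B\<close> unfolding D_def by blast
    show "R_indep d V C'" using R_indep_iff[OF fin'1] ri unfolding p_def by simp
  qed
  have "C \<subseteq> E" using CfB B(1) f by blast
  then show ?thesis using circ fC by blast
qed

lemma indep_sub_rank:
  assumes finU: "finite U" and Fs: "\<forall>e\<in>F. e \<subseteq> U" and ind: "gen_rank d U F = card F" and XF: "X \<subseteq> F"
  shows "gen_rank d U X = card X"
proof -
  define p where "p = (SOME p. generic d U p)"
  have finF: "finite F" using finite_edges[OF finU Fs] .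
  have "rows_indep d p F" using ind rows_indep_iff_rank[OF finF] unfolding gen_rank_def p_def by simp
  then have "rows_indep d p X" using rows_indep_subset[OF finF _ XF] by blast
  then show ?thesis using rows_indep_iff_rank[OF finite_subset[OF XF finF]] unfolding gen_rank_def p_def by simp
qed

theorem lemma4p9:
  fixes d t :: nat and V :: "'a set" and E T :: "'a set set" and v :: 'a
  assumes "d \<ge> 1"
    and "simple_graph V E"
    and "card V \<ge> d"
    and "v \<notin> V"
    and "T \<subseteq> {{v, u} | u. u \<in> V}"
    and "card T = t"
    and "R_min_rigid (d + 1) (insert v V) ((E \<union> {{v, u} | u. u \<in> V}) - T)"
  shows "R_rigid d V E
    \<and> int (card E) = int d * int (card V) - int ((d + 1) choose 2) + int t
    \<and> (let S = {u \<in> V. {v, u} \<notin> (E \<union> {{v, w} | w. w \<in> V}) - T}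
       in R_indep d (V - S) {e \<in> E. e \<inter> S = {}}
          \<and> (\<forall>s\<in>S. \<exists>C \<subseteq> E. R_circuit d V C \<and> s \<in> \<Union>C))"
proof -
  note sg = assms(2) and dV = assms(3) and v = assms(4) and TC0 = assms(5) and tT = assms(6)
  define Cn where "Cn = cone v V"
  have Cn_eq: "{{v, u} | u. u \<in> V} = Cn" unfolding Cn_def cone_def ..
  define F' where "F' = (E \<union> Cn) - T"
  define U where "U = insert v V"
  define n where "n = card V"
  have finV: "finite V" and Es: "\<forall>e\<in>E. e \<subseteq> V \<and> card e = 2" using sg unfolding simple_graph_def by auto
  have finU: "finite U" unfolding U_def using finV by simp
  have cU: "card U = n + 1" unfolding U_def n_def using finV v by simp
  have finE: "finite E" using finite_edges[OF finV] Es by blast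
  have finC: "finite Cn" unfolding Cn_def cone_def using finV by simp
  have cC: "card Cn = n" unfolding Cn_def n_def using card_cone[OF v finV] .
  have TC: "T \<subseteq> Cn" using TC0 Cn_eq by simp
  have disj: "E \<inter> Cn = {}" unfolding Cn_def cone_def using Es v by auto
  have ET: "E \<inter> T = {}" using disj TC by blast
  have finEC: "finite (E \<union> Cn)" using finE finC by simp
  have cEC: "card (E \<union> Cn) = card E + n" using card_Un_disjoint[OF finE finC disj] cC by simp
  have finT: "finite T" using finite_subset[OF TC finC] .
  have TEC: "T \<subseteq> E \<union> Cn" using TC by blast
  have cF': "card F' = card E + n - t" unfolding F'_def using card_Diff_subset[OF finT TEC] cEC tT by simp
  have tn: "t \<le> n" using card_mono[OF finC TC] cC tT by simp
  have cF'i: "int (card F') = int (card E) + int n - int t" using cF' tn by simp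
  have F'sub: "F' \<subseteq> E \<union> Cn" unfolding F'_def by blast
  have EF': "E \<subseteq> F'" unfolding F'_def using ET by blast
  have ECs: "\<forall>e\<in>E \<union> Cn. e \<subseteq> U \<and> card e = 2"
    using Es v unfolding U_def Cn_def cone_def by (auto simp: card_2_iff)
  have ECK: "E \<union> Cn \<subseteq> complete_edges U"
  proof
    fix e assume "e \<in> E \<union> Cn"
    then have "e \<subseteq> U" "card e = 2" using ECs by auto
    then show "e \<in> complete_edges U" unfolding complete_edges_def by (auto simp: card_2_iff)
  qed
  have EK: "E \<subseteq> complete_edges V"
  proof
    fix e assume "e \<in> E"
    then have "e \<subseteq> V" "card e = 2" using Es by auto
    then show "e \<in> complete_edges V" unfolding complete_edges_def by (auto simp: card_2_iff)
  qed
  have mr: "R_rigid (Suc d) U F'" "R_indep (Suc d) U F'"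
    using assms(7) unfolding R_min_rigid_def Cn_eq F'_def[symmetric] U_def[symmetric] by auto
  have Rind: "gen_rank (Suc d) U F' = card F'" using mr(2) unfolding R_indep_def .
  have coneE: "gen_rank (Suc d) U (E \<union> Cn) \<le> gen_rank d V E + n"
    using cone_le[OF finV v] Es unfolding U_def Cn_def n_def by blast
  have monoF': "gen_rank (Suc d) U F' \<le> gen_rank (Suc d) U (E \<union> Cn)"
    unfolding gen_rank_def by (rule rig_rank_mono[OF finEC F'sub])
  have ubd: "int (gen_rank d V E) \<le> int d * int n - int ((d + 1) choose 2)"
    using rank_ub[OF finV dV EK] unfolding n_def .
  have ubd1: "int (gen_rank (Suc d) U (E \<union> Cn)) \<le> int (Suc d) * int (n + 1) - int ((Suc d + 1) choose 2)"
  proof -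
    have "Suc d \<le> card U" using cU dV unfolding n_def by simp
    from rank_ub[OF finU this ECK] show ?thesis using cU by simp
  qed
  have chs: "int ((Suc d + 1) choose 2) = int ((d + 1) choose 2) + int d + 1"
    by (simp add: numeral_2_eq_2)
  have Sdef: "{u \<in> V. {v, u} \<notin> (E \<union> {{v, w} | w. w \<in> V}) - T} = {u \<in> V. {v, u} \<notin> F'}"
    unfolding F'_def Cn_eq ..
  define S where "S = {u \<in> V. {v, u} \<notin> F'}"
  define H where "H = {e \<in> E. e \<inter> S = {}}"
  have indGS: "R_indep d (V - S) H"
  proof -
    define W where "W = V - S"
    have finW: "finite W" unfolding W_def using finV by simp
    have vW: "v \<notin> W" unfolding W_def using v by simp
    have Hs: "\<forall>e\<in>H. e \<subseteq> W \<and> card e = 2" unfolding H_def W_def using Es by blast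
    have finH: "finite H" unfolding H_def using finE by simp
    have coneW: "cone v W \<subseteq> F'"
    proof
      fix e assume "e \<in> cone v W"
      then obtain u where u: "u \<in> W" "e = {v, u}" unfolding cone_def by blast
      then show "e \<in> F'" unfolding W_def S_def by blast
    qed
    have HF': "H \<union> cone v W \<subseteq> F'" using coneW EF' unfolding H_def by blast
    have F's: "\<forall>e\<in>F'. e \<subseteq> U" using ECs F'sub by blast
    have r1: "gen_rank (Suc d) U (H \<union> cone v W) = card (H \<union> cone v W)"
      by (rule indep_sub_rank[OF finU F's Rind HF'])
    have s1: "\<forall>e\<in>H \<union> cone v W. e \<subseteq> insert v W" using Hs unfolding cone_def by blast
    have s2: "\<forall>e\<in>H \<union> cone v W. e \<subseteq> U" using s1 unfolding U_def W_def by blast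
    have "gen_rank (Suc d) (insert v W) (H \<union> cone v W) = gen_rank (Suc d) U (H \<union> cone v W)"
      using gen_rank_vertex[OF _ finU s1 s2] finW by simp
    moreover have "card (H \<union> cone v W) = card H + card W"
    proof -
      have "H \<inter> cone v W = {}" unfolding cone_def using Hs vW by auto
      moreover have "finite (cone v W)" unfolding cone_def using finW by simp
      ultimately show ?thesis using card_Un_disjoint[OF finH] card_cone[OF vW finW] by simp
    qed
    moreover have "gen_rank (Suc d) (insert v W) (H \<union> cone v W) \<le> gen_rank d W H + card W"
      by (rule cone_le[OF finW vW Hs])
    ultimately have "card H \<le> gen_rank d W H" using r1 by simp
    moreover have "gen_rank d W H \<le> card H" unfolding gen_rank_def by (rule rig_rank_le_card[OF finH])
    ultimately show ?thesis unfolding R_indep_def W_def by simp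
  qed
  show ?thesis
  proof (cases "F' = complete_edges U \<and> card U \<le> Suc d + 1")
    case True
    have T0: "T = {}"
    proof (rule ccontr)
      assume "T \<noteq> {}"
      then obtain e where e: "e \<in> T" by blast
      then have "e \<in> Cn" using TC by blast
      then have "e \<in> complete_edges U" using ECK by blast
      then have "e \<in> F'" using True by simp
      then show False using e unfolding F'_def by blast
    qed
    have t0: "t = 0" using T0 tT by simp
    have EK': "E = complete_edges V"
    proof
      show "E \<subseteq> complete_edges V" by (rule EK)
    next
      show "complete_edges V \<subseteq> E"
      proof
        fix e assume e: "e \<in> complete_edges V"
        then have "e \<in> complete_edges U" unfolding complete_edges_def U_def by blast
        then have "e \<in> E \<union> Cn" using True F'sub by blast
        moreover have "e \<notin> Cn"
        proof
          assume "e \<in> Cn"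
          then have "v \<in> e" unfolding Cn_def cone_def by blast
          moreover have "e \<subseteq> V" using e unfolding complete_edges_def by blast
          ultimately show False using v by blast
        qed
        ultimately show "e \<in> E" by blast
      qed
    qed
    have nd: "n \<le> d + 1" using True cU by simp
    have rig: "R_rigid d V E" unfolding R_rigid_def using EK' nd unfolding n_def by simp
    have cE: "card E = n choose 2" unfolding EK' n_def by (rule complete_edges_card[OF finV])
    have arith: "int (card E) = int d * int n - int ((d + 1) choose 2) + int t"
    proof -
      have h1: "2 * int (n choose 2) = int n * (int n - 1)" by (rule ch2_int)
      have h2: "2 * int ((d + 1) choose 2) = int (d + 1) * (int (d + 1) - 1)" by (rule ch2_int)
      have "n = d \<or> n = d + 1" using nd dV unfolding n_def by auto
      then have "2 * int (card E) = 2 * (int d * int n - int ((d + 1) choose 2))"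
        using h1 h2 unfolding cE by (auto simp: algebra_simps)
      then show ?thesis using t0 by simp
    qed
    have S0: "S = {}"
    proof -
      have "{v, u} \<in> F'" if "u \<in> V" for u
      proof -
        have "{v, u} \<in> Cn" unfolding Cn_def cone_def using that by blast
        then show ?thesis using ECK True by blast
      qed
      then show ?thesis unfolding S_def by blast
    qed
    show ?thesis
      unfolding Sdef Let_def S_def[symmetric] H_def[symmetric] n_def[symmetric]
      using rig arith indGS S0 by simp
  next
    case False
    then have formula: "int (gen_rank (Suc d) U F') = int (Suc d) * int (card U) - int ((Suc d + 1) choose 2)"
      using mr(1) unfolding R_rigid_def by blast
    define M where "M = int (Suc d) * int (n + 1) - int ((Suc d + 1) choose 2)"
    have cF'M: "int (card F') = M" using formula Rind cU unfolding M_def by simp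
    have Malt: "M = int d * int n - int ((d + 1) choose 2) + int n" unfolding M_def chs by (simp add: algebra_simps)
    have chain: "M \<le> int (gen_rank (Suc d) U (E \<union> Cn))" using cF'M Rind monoF' by simp
    have genE: "int (gen_rank d V E) = int d * int n - int ((d + 1) choose 2)"
      using chain coneE ubd Malt by simp
    have genEC: "int (gen_rank (Suc d) U (E \<union> Cn)) = M" using chain ubd1 unfolding M_def by simp
    have rig: "R_rigid d V E" unfolding R_rigid_def using genE unfolding n_def by simp
    have arith: "int (card E) = int d * int n - int ((d + 1) choose 2) + int t"
      using cF'i cF'M Malt by simp
    have circ: "\<forall>s\<in>S. \<exists>C \<subseteq> E. R_circuit d V C \<and> s \<in> \<Union>C"
    proof
      fix s assume sS: "s \<in> S"
      show "\<exists>C \<subseteq> E. R_circuit d V C \<and> s \<in> \<Union>C"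
      proof (rule ccontr)
        assume nc: "\<not> (\<exists>C \<subseteq> E. R_circuit d V C \<and> s \<in> \<Union>C)"
        have sV: "s \<in> V" and vsF': "{v, s} \<notin> F'" using sS unfolding S_def by auto
        have sv: "s \<noteq> v" using sV v by auto
        have vsC: "{v, s} \<in> Cn" unfolding Cn_def cone_def using sV by blast
        have Es': "\<forall>e\<in>E. e \<subseteq> V" using Es by blast
        have strict: "gen_rank d V (E - {f}) < gen_rank d V E" if f: "f \<in> E" "s \<in> f" for f
        proof -
          have "gen_rank d V (E - {f}) \<le> gen_rank d V E"
            unfolding gen_rank_def by (rule rig_rank_mono[OF finE]) blast
          moreover have "gen_rank d V (E - {f}) \<noteq> gen_rank d V E"
          proof
            assume "gen_rank d V (E - {f}) = gen_rank d V E"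
            then obtain C where "C \<subseteq> E" "R_circuit d V C" "f \<in> C"
              using circuit_exists[OF finV Es' f(1)] by blast
            then show False using nc f(2) by blast
          qed
          ultimately show ?thesis by simp
        qed
        define p where "p = (SOME p. generic (Suc d) U p)"
        have gen: "generic (Suc d) U p" unfolding p_def by (rule generic_some[OF finU])
        have finF': "finite F'" using finite_subset[OF F'sub finEC] .
        have indF': "rows_indep (Suc d) p F'"
          using Rind rows_indep_iff_rank[OF finF'] unfolding gen_rank_def p_def by simp
        have rkEC: "int (rig_rank (Suc d) p (E \<union> Cn)) = M" using genEC unfolding gen_rank_def p_def .
        have vsF: "insert {v, s} F' \<subseteq> E \<union> Cn" using F'sub vsC by blast
        have notind: "\<not> rows_indep (Suc d) p (insert {v, s} F')"
        proof
          assume "rows_indep (Suc d) p (insert {v, s} F')"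
          then have "card (insert {v, s} F') \<le> rig_rank (Suc d) p (E \<union> Cn)" by (intro rig_rank_ge[OF finEC vsF])
          then have "int (card F') + 1 \<le> M" using rkEC vsF' finF' by simp
          then show False using cF'M by simp
        qed
        then obtain c where c0: "\<forall>w k. k < Suc d \<longrightarrow> (\<Sum>e\<in>insert {v, s} F'. c e * rig_entry p e w k) = 0"
            and cnz: "\<exists>e\<in>insert {v, s} F'. c e \<noteq> 0"
          unfolding rows_indep_def by blast
        have sumsplit: "(\<Sum>e\<in>insert {v, s} F'. c e * rig_entry p e w k) = c {v, s} * rig_entry p {v, s} w k + (\<Sum>e\<in>F'. c e * rig_entry p e w k)" for w k
          using finF' vsF' by simp
        have cvs: "c {v, s} \<noteq> 0"
        proof
          assume cz: "c {v, s} = 0"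
          then have "\<forall>w k. k < Suc d \<longrightarrow> (\<Sum>e\<in>F'. c e * rig_entry p e w k) = 0" using c0 sumsplit by simp
          then have "\<forall>e\<in>F'. c e = 0" using indF' unfolding rows_indep_def by blast
          then show False using cnz cz by blast
        qed
        obtain f where f: "f \<in> E" "s \<in> f" "c f \<noteq> 0"
        proof (rule ccontr)
          note th = that
          assume nf: "\<not> thesis"
          have zero: "c e * rig_entry p e s 0 = 0" if "e \<in> F'" for e
          proof (cases "s \<in> e")
            case False then show ?thesis by (simp add: rig_entry_outside)
          next
            case True
            have "e \<in> E"
            proof (rule ccontr)
              assume "e \<notin> E"
              then have "e \<in> Cn" using that F'sub by blast
              then obtain u where u: "u \<in> V" "e = {v, u}" unfolding Cn_def cone_def by blast
              then have "u = s" using True sv by auto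
              then show False using that vsF' u by simp
            qed
            then have "c e = 0" using th[of e] True nf by blast
            then show ?thesis by simp
          qed
          have "(\<Sum>e\<in>insert {v, s} F'. c e * rig_entry p e s 0) = c {v, s} * (p s 0 - p v 0)"
          proof -
            have "(\<Sum>e\<in>F'. c e * rig_entry p e s 0) = 0" using zero by (intro sum.neutral) blast
            then show ?thesis unfolding sumsplit using rig_entry_pair[of s v p 0] sv by (simp add: insert_commute)
          qed
          then have "c {v, s} * (p s 0 - p v 0) = 0" using c0 by simp
          moreover have "p s 0 \<noteq> p v 0" using generic_coord[OF gen finU, of s v 0] sV sv unfolding U_def by simp
          ultimately show False using cvs by simp
        qed
        have fF': "f \<in> F'" using f(1) EF' by blast
        have fvs: "f \<noteq> {v, s}" using f(1) vsC disj by blast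
        define X where "X = insert {v, s} (F' - {f})"
        have finX: "finite X" unfolding X_def using finF' by simp
        have ins: "insert {v, s} F' = insert f X" unfolding X_def using fF' by blast
        have fX: "f \<notin> X" unfolding X_def using fvs by blast
        have sum0: "(\<Sum>e\<in>insert {v, s} F'. sc (c e) (erow (Suc d) p e)) = 0"
          using c0 unfolding rows_sum_zero_iff .
        then have fz: "sc (c f) (erow (Suc d) p f) + (\<Sum>e\<in>X. sc (c e) (erow (Suc d) p e)) = 0"
          unfolding ins using finX fX by simp
        have Hz: "c f * erow (Suc d) p f z + (\<Sum>e\<in>X. c e * erow (Suc d) p e z) = 0" for z
          using fun_cong[OF fz, of z] by (simp add: sc_def func_plus func_zero fsum_apply)
        have "erow (Suc d) p f = sc (- 1 / c f) (\<Sum>e\<in>X. sc (c e) (erow (Suc d) p e))"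
        proof (rule ext)
          fix z
          have "(\<Sum>e\<in>X. sc (c e) (erow (Suc d) p e)) z = (\<Sum>e\<in>X. c e * erow (Suc d) p e z)"
            by (simp add: fsum_apply sc_def)
          moreover have "erow (Suc d) p f z = - (\<Sum>e\<in>X. c e * erow (Suc d) p e z) / c f"
            using Hz[of z] f(3) by (simp add: field_simps)
          ultimately show "erow (Suc d) p f z = sc (- 1 / c f) (\<Sum>e\<in>X. sc (c e) (erow (Suc d) p e)) z"
            by (simp add: sc_def)
        qed
        moreover have inS: "(\<Sum>e\<in>X. sc (c e) (erow (Suc d) p e)) \<in> FV.span (erow (Suc d) p ` X)"
        proof (rule FV.span_sum)
          fix e assume "e \<in> X"
          then have "erow (Suc d) p e \<in> erow (Suc d) p ` X" by (rule imageI)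
          then show "sc (c e) (erow (Suc d) p e) \<in> FV.span (erow (Suc d) p ` X)"
            by (rule FV.span_scale[OF FV.span_base])
        qed
        ultimately have fspan: "erow (Suc d) p f \<in> FV.span (erow (Suc d) p ` X)"
          using FV.span_scale[OF inS, of "- 1 / c f"] by simp
        have F'span: "erow (Suc d) p ` F' \<subseteq> FV.span (erow (Suc d) p ` X)"
        proof
          fix r assume "r \<in> erow (Suc d) p ` F'"
          then obtain e where e: "e \<in> F'" "r = erow (Suc d) p e" by blast
          show "r \<in> FV.span (erow (Suc d) p ` X)"
          proof (cases "e = f")
            case True then show ?thesis using fspan e by simp
          next
            case False
            then have "e \<in> X" unfolding X_def using e by blast
            then show ?thesis using e by (auto intro: FV.span_base)
          qed
        qed
        have "card F' \<le> rig_rank (Suc d) p X" by (rule rows_span_bound[OF finF' finX indF' F'span])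
        also have "\<dots> \<le> rig_rank (Suc d) p ((E - {f}) \<union> Cn)"
        proof (rule rig_rank_mono)
          show "finite ((E - {f}) \<union> Cn)" using finE finC by simp
          show "X \<subseteq> (E - {f}) \<union> Cn" unfolding X_def using F'sub vsC by blast
        qed
        also have "\<dots> = gen_rank (Suc d) U ((E - {f}) \<union> Cn)" unfolding gen_rank_def p_def ..
        also have "\<dots> \<le> gen_rank d V (E - {f}) + n"
          using cone_le[OF finV v, of "E - {f}" d] Es unfolding U_def Cn_def n_def by blast
        finally have "int (card F') \<le> int (gen_rank d V (E - {f})) + int n" by simp
        moreover have "gen_rank d V (E - {f}) < gen_rank d V E" using strict f by blast
        ultimately have "int (card F') < int (gen_rank d V E) + int n" by simp
        then show False using genE cF'M Malt by simp
      qed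
    qed
    show ?thesis
      unfolding Sdef Let_def S_def[symmetric] H_def[symmetric] n_def[symmetric]
      using rig arith indGS circ by simp
  qed
qed

end
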